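(* A matrix $M\in\mathbb{R}_+^{p\times q}$ with $\operatorname{rank}(M)\ge 2$ is a slack matrix of some polytope if and only if $\{x^TM: x\in\mathbb{R}_+^p\}=\{x^TM: x\in\mathbb{R}^p\}\cap\mathbb{R}_+^q$ (equivalently, $\{Mz: z\in\mathbb{R}_+^q\}=\{Mz: z\in\mathbb{R}^q\}\cap\mathbb{R}_+^p$) and the all-ones vector $\mathbb{1}\in\mathbb{R}^p$ lies in the column span of $M$.
   Context: For a polytope $P\subseteq\mathbb{R}^n$ with $\dim(P)\ge 1$, a slack matrix of $P$ is any matrix $S=[\mathbb{1},V]\cdot[w,-W]^T\in\mathbb{R}^{p\times q}$ (so $S_{ij}=w_j-W_jv_i$, with $v_i$ the $i$th row of $V$ and $W_j$ the $j$th row of $W$), where $V\in\mathbb{R}^{p\times n}$ satisfies $P=\operatorname{conv}(\text{rows of }V)$ and $W\in\mathbb{R}^{q\times n}$, $w\in\mathbb{R}^q$ satisfy $P=\{x\in\mathbb{R}^n: Wx\le w\}$. A matrix is a slack matrix of some polytope if it is a slack matrix of some polytope of dimension at least one. *)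

theory Defs
  imports "Jordan_Normal_Form.Matrix" "Jordan_Normal_Form.DL_Rank"
begin

definition nonneg_vec :: "real vec \<Rightarrow> bool" where
  "nonneg_vec x \<longleftrightarrow> (\<forall>i < dim_vec x. x $ i \<ge> 0)"

definition nonneg_mat :: "real mat \<Rightarrow> bool" where
  "nonneg_mat M \<longleftrightarrow> (\<forall>i < dim_row M. \<forall>j < dim_col M. M $$ (i, j) \<ge> 0)"

definition conv_rows :: "real mat \<Rightarrow> real vec set" where
  "conv_rows V = {x. \<exists>l \<in> carrier_vec (dim_row V). nonneg_vec l \<and> sum_list (list_of_vec l) = 1
                      \<and> x = transpose_mat V *\<^sub>v l}"

definition polyhedron :: "real mat \<Rightarrow> real vec \<Rightarrow> real vec set" where
  "polyhedron W w = {x \<in> carrier_vec (dim_col W). \<forall>j < dim_row W. row W j \<bullet> x \<le> w $ j}"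

text \<open>dim(P) >= 1 for a nonempty convex set P: P is not a single point.\<close>
definition dim_ge_1 :: "real vec set \<Rightarrow> bool" where
  "dim_ge_1 P \<longleftrightarrow> (\<exists>x \<in> P. \<exists>y \<in> P. x \<noteq> y)"

text \<open>S is a slack matrix of some polytope of dimension at least one:
  S = [1,V][w,-W]^T, i.e. S_ij = w_j - W_j v_i, where P = conv(rows V) = {x. W x <= w}.\<close>
definition is_slack_matrix :: "real mat \<Rightarrow> bool" where
  "is_slack_matrix S \<longleftrightarrow>
     (\<exists>n V W w. V \<in> carrier_mat (dim_row S) n \<and> W \<in> carrier_mat (dim_col S) n
        \<and> w \<in> carrier_vec (dim_col S)
        \<and> conv_rows V = polyhedron W w
        \<and> dim_ge_1 (conv_rows V)
        \<and> S = mat (dim_row S) (dim_col S) (\<lambda>(i, j). w $ j - row W j \<bullet> row V i))"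

end

theory Submission
  imports Defs
begin


datatype ix = B nat | K ix | Pr ix ix

lemma sum_split3:
  fixes f :: "ix \<Rightarrow> real"
  assumes "finite I"
  and that: "\<And>i. i \<in> I \<Longrightarrow> (P0 i \<and> \<not> Pp i \<and> \<not> Pm i) \<or> (\<not> P0 i \<and> Pp i \<and> \<not> Pm i) \<or> (\<not> P0 i \<and> \<not> Pp i \<and> Pm i)"
  shows "(\<Sum>i\<in>I. f i) = (\<Sum>i\<in>{i\<in>I. P0 i}. f i) + (\<Sum>i\<in>{i\<in>I. Pp i}. f i) + (\<Sum>i\<in>{i\<in>I. Pm i}. f i)"
proof -
  have e: "I = {i\<in>I. P0 i} \<union> {i\<in>I. Pp i} \<union> {i\<in>I. Pm i}" using that by blast
  have "(\<Sum>i\<in>I. f i) = (\<Sum>i\<in>{i\<in>I. P0 i} \<union> {i\<in>I. Pp i} \<union> {i\<in>I. Pm i}. f i)" using e by simp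
  also have "\<dots> = (\<Sum>i\<in>{i\<in>I. P0 i} \<union> {i\<in>I. Pp i}. f i) + (\<Sum>i\<in>{i\<in>I. Pm i}. f i)"
    by (rule sum.union_disjoint) (use assms that in auto)
  also have "(\<Sum>i\<in>{i\<in>I. P0 i} \<union> {i\<in>I. Pp i}. f i) = (\<Sum>i\<in>{i\<in>I. P0 i}. f i) + (\<Sum>i\<in>{i\<in>I. Pp i}. f i)"
    by (rule sum.union_disjoint) (use assms that in auto)
  finally show ?thesis .
qed

lemma lin2: "(\<Sum>l\<in>A. (c1::real) * f l + c2 * g l) = c1 * (\<Sum>l\<in>A. f l) + c2 * (\<Sum>l\<in>A. g l)"
  by (simp add: sum.distrib sum_distrib_left)

lemma farkas:
  fixes G :: "ix \<Rightarrow> nat \<Rightarrow> real" and h :: "ix \<Rightarrow> real"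
  assumes "finite I" "\<not> (\<exists>y. \<forall>i\<in>I. (\<Sum>l<n. G i l * y l) \<ge> h i)"
  shows "\<exists>\<mu>. (\<forall>i\<in>I. \<mu> i \<ge> 0) \<and> (\<forall>l<n. (\<Sum>i\<in>I. \<mu> i * G i l) = 0) \<and> (\<Sum>i\<in>I. \<mu> i * h i) > 0"
  using assms
proof (induction n arbitrary: I G h)
  case 0
  then obtain i0 where i0: "i0 \<in> I" "h i0 > 0" by force
  have "(\<Sum>i\<in>I. (if i = i0 then 1 else 0) * h i) = h i0"
  proof -
    have "(\<Sum>i\<in>I. (if i = i0 then 1 else 0) * h i) = (\<Sum>i\<in>I. if i = i0 then h i else 0)"
      by (rule sum.cong) auto
    also have "\<dots> = h i0" using i0 0 by simp
    finally show ?thesis .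
  qed
  then show ?case using i0 by (intro exI[of _ "\<lambda>i. if i = i0 then 1 else 0"]) auto
next
  case (Suc n)
  define Tp where "Tp = {i\<in>I. G i n > 0}"
  define Tm where "Tm = {i\<in>I. G i n < 0}"
  define T0 where "T0 = {i\<in>I. G i n = 0}"
  have fin: "finite Tp" "finite Tm" "finite T0" using Suc.prems(1) unfolding Tp_def Tm_def T0_def by auto
  define G' where "G' = (\<lambda>k l. case k of K i \<Rightarrow> G i l | Pr s t \<Rightarrow> (- G t n) * G s l + G s n * G t l | B _ \<Rightarrow> 0)"
  define h' where "h' = (\<lambda>k. case k of K i \<Rightarrow> h i | Pr s t \<Rightarrow> (- G t n) * h s + G s n * h t | B _ \<Rightarrow> 0)"
  define I' where "I' = K ` T0 \<union> (\<lambda>(s,t). Pr s t) ` (Tp \<times> Tm)"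
  have finI': "finite I'" unfolding I'_def using fin by auto
  have noy: "\<not> (\<exists>y. \<forall>k\<in>I'. (\<Sum>l<n. G' k l * y l) \<ge> h' k)"
  proof
    assume "\<exists>y. \<forall>k\<in>I'. (\<Sum>l<n. G' k l * y l) \<ge> h' k"
    then obtain y' where y': "\<forall>k\<in>I'. (\<Sum>l<n. G' k l * y' l) \<ge> h' k" by blast
    define a where "a = (\<lambda>i. \<Sum>l<n. G i l * y' l)"
    have a0: "a i \<ge> h i" if "i \<in> T0" for i
      using y'[rule_format, of "K i"] that unfolding I'_def G'_def h'_def a_def by auto
    have apm: "(- G t n) * a s + G s n * a t \<ge> (- G t n) * h s + G s n * h t" if "s \<in> Tp" "t \<in> Tm" for s t
    proof -
      have "Pr s t \<in> I'" unfolding I'_def using that by auto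
      then have "(\<Sum>l<n. G' (Pr s t) l * y' l) \<ge> h' (Pr s t)" using y' by blast
      moreover have "(\<Sum>l<n. G' (Pr s t) l * y' l) = (- G t n) * a s + G s n * a t"
      proof -
        have "(\<Sum>l<n. G' (Pr s t) l * y' l) = (\<Sum>l<n. (- G t n) * (G s l * y' l) + G s n * (G t l * y' l))"
          unfolding G'_def by (rule sum.cong) (auto simp: algebra_simps)
        also have "\<dots> = (- G t n) * (\<Sum>l<n. G s l * y' l) + G s n * (\<Sum>l<n. G t l * y' l)"
          by (rule lin2)
        finally show ?thesis unfolding a_def .
      qed
      ultimately show ?thesis unfolding h'_def by simp
    qed
    define L where "L = (\<lambda>s. (h s - a s) / G s n)"
    define U where "U = (\<lambda>t. (h t - a t) / G t n)"
    have LU: "L s \<le> U t" if "s \<in> Tp" "t \<in> Tm" for s t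
    proof -
      have gs: "G s n > 0" and gt: "G t n < 0" using that unfolding Tp_def Tm_def by auto
      have "(- G t n) * (h s - a s) \<le> G s n * (a t - h t)" using apm[OF that] by (simp add: algebra_simps)
      then have "(h s - a s) / G s n \<le> (a t - h t) / (- G t n)"
        using gs gt by (simp add: divide_simps mult.commute) (simp add: algebra_simps)
      then show ?thesis unfolding L_def U_def using gt by (simp add: divide_simps)
    qed
    define yn where "yn = (if Tp = {} then (if Tm = {} then 0 else Min (U ` Tm)) else Max (L ` Tp))"
    have yL: "L s \<le> yn" if "s \<in> Tp" for s
      using that fin unfolding yn_def by (auto intro: Max_ge)
    have yU: "yn \<le> U t" if "t \<in> Tm" for t
    proof (cases "Tp = {}")
      case True then show ?thesis using that fin unfolding yn_def by (auto intro: Min_le)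
    next
      case False
      then have "Max (L ` Tp) \<in> L ` Tp" using fin by (intro Max_in) auto
      then obtain s where "s \<in> Tp" "Max (L ` Tp) = L s" by auto
      then show ?thesis using LU[OF _ that] False unfolding yn_def by auto
    qed
    define y where "y = y'(n := yn)"
    have "\<forall>i\<in>I. (\<Sum>l<Suc n. G i l * y l) \<ge> h i"
    proof
      fix i assume i: "i \<in> I"
      have "(\<Sum>l<Suc n. G i l * y l) = a i + G i n * yn"
        unfolding a_def y_def by (simp add: sum.lessThan_Suc)
      also have "\<dots> \<ge> h i"
      proof -
        consider "G i n = 0" | "G i n > 0" | "G i n < 0" by linarith
        then show ?thesis
        proof cases
          case 1 then show ?thesis using a0[of i] i unfolding T0_def by auto
        next
          case 2
          then have "L i \<le> yn" using yL i unfolding Tp_def by auto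
          then show ?thesis using 2 unfolding L_def by (simp add: divide_simps mult.commute)
        next
          case 3
          then have "yn \<le> U i" using yU i unfolding Tm_def by auto
          then show ?thesis using 3 unfolding U_def by (simp add: divide_simps mult.commute)
        qed
      qed
      finally show "(\<Sum>l<Suc n. G i l * y l) \<ge> h i" .
    qed
    then show False using Suc.prems(2) by blast
  qed
  obtain \<mu>' where mu': "\<forall>k\<in>I'. \<mu>' k \<ge> 0" "\<forall>l<n. (\<Sum>k\<in>I'. \<mu>' k * G' k l) = 0" "(\<Sum>k\<in>I'. \<mu>' k * h' k) > 0"
    using Suc.IH[OF finI' noy] by blast
  define \<mu> where "\<mu> = (\<lambda>i. (if i \<in> T0 then \<mu>' (K i) else 0)
     + (if i \<in> Tp then (\<Sum>t\<in>Tm. \<mu>' (Pr i t) * (- G t n)) else 0)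
     + (if i \<in> Tm then (\<Sum>s\<in>Tp. \<mu>' (Pr s i) * G s n) else 0))"
  have key: "(\<Sum>i\<in>I. \<mu> i * \<phi> i) = (\<Sum>k\<in>I'. \<mu>' k * (case k of K i \<Rightarrow> \<phi> i | Pr s t \<Rightarrow> (- G t n) * \<phi> s + G s n * \<phi> t | B _ \<Rightarrow> 0))"
    for \<phi> :: "ix \<Rightarrow> real"
  proof -
    define \<phi>' where "\<phi>' = (\<lambda>k. case k of K i \<Rightarrow> \<phi> i | Pr s t \<Rightarrow> (- G t n) * \<phi> s + G s n * \<phi> t | B _ \<Rightarrow> 0)"
    have "(\<Sum>k\<in>I'. \<mu>' k * \<phi>' k) = (\<Sum>k\<in>K ` T0. \<mu>' k * \<phi>' k) + (\<Sum>k\<in>(\<lambda>(s,t). Pr s t) ` (Tp \<times> Tm). \<mu>' k * \<phi>' k)"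
      unfolding I'_def by (rule sum.union_disjoint) (use fin in auto)
    also have "(\<Sum>k\<in>K ` T0. \<mu>' k * \<phi>' k) = (\<Sum>i\<in>T0. \<mu>' (K i) * \<phi> i)"
      by (subst sum.reindex) (auto simp: inj_on_def \<phi>'_def)
    also have "(\<Sum>k\<in>(\<lambda>(s,t). Pr s t) ` (Tp \<times> Tm). \<mu>' k * \<phi>' k)
        = (\<Sum>(s,t)\<in>Tp \<times> Tm. \<mu>' (Pr s t) * ((- G t n) * \<phi> s + G s n * \<phi> t))"
      by (subst sum.reindex) (auto simp: inj_on_def \<phi>'_def intro!: sum.cong)
    also have "\<dots> = (\<Sum>(s,t)\<in>Tp \<times> Tm. \<mu>' (Pr s t) * (- G t n) * \<phi> s) + (\<Sum>(s,t)\<in>Tp \<times> Tm. \<mu>' (Pr s t) * G s n * \<phi> t)"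
      by (simp only: sum.distrib[symmetric]) (rule sum.cong, auto simp: algebra_simps)
    also have "(\<Sum>(s,t)\<in>Tp \<times> Tm. \<mu>' (Pr s t) * (- G t n) * \<phi> s) = (\<Sum>s\<in>Tp. (\<Sum>t\<in>Tm. \<mu>' (Pr s t) * (- G t n)) * \<phi> s)"
      by (simp add: sum.cartesian_product[symmetric] sum_distrib_right)
    also have "(\<Sum>(s,t)\<in>Tp \<times> Tm. \<mu>' (Pr s t) * G s n * \<phi> t) = (\<Sum>t\<in>Tm. (\<Sum>s\<in>Tp. \<mu>' (Pr s t) * G s n) * \<phi> t)"
      by (simp add: sum.cartesian_product[symmetric] sum_distrib_right) (rule sum.swap)
    finally have R: "(\<Sum>k\<in>I'. \<mu>' k * \<phi>' k) = (\<Sum>i\<in>T0. \<mu>' (K i) * \<phi> i) + (\<Sum>s\<in>Tp. (\<Sum>t\<in>Tm. \<mu>' (Pr s t) * (- G t n)) * \<phi> s)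
        + (\<Sum>t\<in>Tm. (\<Sum>s\<in>Tp. \<mu>' (Pr s t) * G s n) * \<phi> t)" by (simp add: add.assoc)
    have "(\<Sum>i\<in>I. \<mu> i * \<phi> i) = (\<Sum>i\<in>T0. \<mu> i * \<phi> i) + (\<Sum>i\<in>Tp. \<mu> i * \<phi> i) + (\<Sum>i\<in>Tm. \<mu> i * \<phi> i)"
      unfolding T0_def Tp_def Tm_def by (rule sum_split3) (use Suc.prems(1) in auto)
    also have "(\<Sum>i\<in>T0. \<mu> i * \<phi> i) = (\<Sum>i\<in>T0. \<mu>' (K i) * \<phi> i)"
      by (rule sum.cong) (auto simp: \<mu>_def T0_def Tp_def Tm_def)
    also have "(\<Sum>i\<in>Tp. \<mu> i * \<phi> i) = (\<Sum>s\<in>Tp. (\<Sum>t\<in>Tm. \<mu>' (Pr s t) * (- G t n)) * \<phi> s)"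
      by (rule sum.cong) (auto simp: \<mu>_def T0_def Tp_def Tm_def)
    also have "(\<Sum>i\<in>Tm. \<mu> i * \<phi> i) = (\<Sum>t\<in>Tm. (\<Sum>s\<in>Tp. \<mu>' (Pr s t) * G s n) * \<phi> t)"
      by (rule sum.cong) (auto simp: \<mu>_def T0_def Tp_def Tm_def)
    finally show ?thesis using R unfolding \<phi>'_def by simp
  qed
  have "\<forall>i\<in>I. \<mu> i \<ge> 0"
  proof
    fix i assume "i \<in> I"
    have a: "(\<Sum>t\<in>Tm. \<mu>' (Pr i t) * (- G t n)) \<ge> 0" if "i \<in> Tp"
    proof (rule sum_nonneg)
      fix t assume t: "t \<in> Tm"
      then have "Pr i t \<in> I'" using that unfolding I'_def by auto
      then have "\<mu>' (Pr i t) \<ge> 0" using mu'(1) by blast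
      moreover have "- G t n \<ge> 0" using t unfolding Tm_def by auto
      ultimately show "\<mu>' (Pr i t) * (- G t n) \<ge> 0" by (rule mult_nonneg_nonneg)
    qed
    have b: "(\<Sum>s\<in>Tp. \<mu>' (Pr s i) * G s n) \<ge> 0" if "i \<in> Tm"
      by (rule sum_nonneg) (use mu'(1) that in \<open>auto simp: I'_def Tp_def intro!: mult_nonneg_nonneg\<close>)
    have c: "\<mu>' (K i) \<ge> 0" if "i \<in> T0" using mu'(1) that by (auto simp: I'_def)
    show "\<mu> i \<ge> 0" unfolding \<mu>_def using a b c by auto
  qed
  moreover have "\<forall>l<Suc n. (\<Sum>i\<in>I. \<mu> i * G i l) = 0"
  proof (intro allI impI)
    fix l assume l: "l < Suc n"
    show "(\<Sum>i\<in>I. \<mu> i * G i l) = 0"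
    proof (cases "l = n")
      case True
      have "(\<Sum>k\<in>I'. \<mu>' k * (case k of K i \<Rightarrow> G i n | Pr s t \<Rightarrow> (- G t n) * G s n + G s n * G t n | B _ \<Rightarrow> 0)) = 0"
        by (rule sum.neutral) (auto simp: I'_def T0_def)
      then show ?thesis using key[of "\<lambda>i. G i n"] True by simp
    next
      case False
      then have "l < n" using l by simp
      then show ?thesis using key[of "\<lambda>i. G i l"] mu'(2) unfolding G'_def by simp
    qed
  qed
  moreover have "(\<Sum>i\<in>I. \<mu> i * h i) > 0" using key[of h] mu'(3) unfolding h'_def by simp
  ultimately show ?case by blast
qed




lemma inj_from_surj:
  fixes C :: "nat \<Rightarrow> nat \<Rightarrow> real"
  assumes y: "\<forall>l<k. (\<Sum>i<p. y i * C i l) = u l"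
    and z: "\<forall>i<p. (\<Sum>l<k. C i l * u l) = 0"
  shows "\<forall>l<k. u l = 0"
proof -
  have "(\<Sum>l<k. u l * u l) = (\<Sum>l<k. (\<Sum>i<p. y i * C i l) * u l)" using y by simp
  also have "\<dots> = (\<Sum>i<p. y i * (\<Sum>l<k. C i l * u l))"
    by (simp add: sum_distrib_left sum_distrib_right mult.assoc) (rule sum.swap)
  also have "\<dots> = 0" using z by simp
  finally have "(\<Sum>l<k. u l * u l) = 0" .
  then have "\<forall>l\<in>{..<k}. u l * u l = 0" by (subst sum_nonneg_eq_0_iff[symmetric]) auto
  then show ?thesis by auto
qed

lemma factor:
  fixes A :: "nat \<Rightarrow> nat \<Rightarrow> real"
  shows "\<exists>(k::nat) C D. (\<forall>i<p. \<forall>j<q. A i j = (\<Sum>l<k. C i l * D l j))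
     \<and> (\<forall>t. \<exists>y. \<forall>l<k. (\<Sum>i<p. y i * C i l) = t l)
     \<and> (\<forall>g. \<exists>z. \<forall>l<k. (\<Sum>j<q. D l j * z j) = g l)"
proof (induction "card {i. i<p \<and> (\<exists>j<q. A i j \<noteq> 0)}" arbitrary: A rule: less_induct)
  case less
  show ?case
  proof (cases "\<exists>i<p. \<exists>j<q. A i j \<noteq> 0")
    case False
    define Z :: "nat \<Rightarrow> nat \<Rightarrow> real" where "Z = (\<lambda>i l. 0)"
    have "\<forall>i<p. \<forall>j<q. A i j = (\<Sum>l<0. Z i l * Z l j)" using False by simp
    moreover have "\<forall>t. \<exists>y. \<forall>l<(0::nat). (\<Sum>i<p. y i * Z i l) = t l" by simp
    moreover have "\<forall>g. \<exists>z. \<forall>l<(0::nat). (\<Sum>j<q. Z l j * z j) = g l" by simp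
    ultimately show ?thesis by blast
  next
    case True
    then obtain i0 j0 where ij: "i0 < p" "j0 < q" "A i0 j0 \<noteq> 0" by blast
    define a where "a = A i0 j0"
    define A' where "A' = (\<lambda>i j. A i j - (A i j0 / a) * A i0 j)"
    have r0: "A' i0 j = 0" for j unfolding A'_def a_def using ij by simp
    have c0: "A' i j0 = 0" for i unfolding A'_def a_def using ij by simp
    have sub: "{i. i<p \<and> (\<exists>j<q. A' i j \<noteq> 0)} \<subseteq> {i. i<p \<and> (\<exists>j<q. A i j \<noteq> 0)} - {i0}"
    proof
      fix i assume "i \<in> {i. i<p \<and> (\<exists>j<q. A' i j \<noteq> 0)}"
      then obtain j where "i < p" "j < q" "A' i j \<noteq> 0" by auto
      moreover have "i \<noteq> i0" using r0 \<open>A' i j \<noteq> 0\<close> by auto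
      moreover have "A i j \<noteq> 0 \<or> A i j0 \<noteq> 0" using \<open>A' i j \<noteq> 0\<close> unfolding A'_def by auto
      moreover have "\<exists>j'<q. A i j' \<noteq> 0" using \<open>A i j \<noteq> 0 \<or> A i j0 \<noteq> 0\<close> \<open>j < q\<close> ij(2) by blast
      ultimately show "i \<in> {i. i<p \<and> (\<exists>j<q. A i j \<noteq> 0)} - {i0}" by blast
    qed
    have "card {i. i<p \<and> (\<exists>j<q. A' i j \<noteq> 0)} < card {i. i<p \<and> (\<exists>j<q. A i j \<noteq> 0)}"
    proof -
      have "card {i. i<p \<and> (\<exists>j<q. A' i j \<noteq> 0)} \<le> card ({i. i<p \<and> (\<exists>j<q. A i j \<noteq> 0)} - {i0})"
        by (rule card_mono[OF _ sub]) auto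
      also have "\<dots> < card {i. i<p \<and> (\<exists>j<q. A i j \<noteq> 0)}"
        by (rule card_Diff1_less) (use ij in auto)
      finally show ?thesis .
    qed
    from less.hyps[OF this] obtain k :: nat and C' D' where
      fac: "\<forall>i<p. \<forall>j<q. A' i j = (\<Sum>l<k. C' i l * D' l j)"
      and sy: "\<forall>t. \<exists>y. \<forall>l<k. (\<Sum>i<p. y i * C' i l) = t l"
      and sz: "\<forall>g. \<exists>z. \<forall>l<k. (\<Sum>j<q. D' l j * z j) = g l" by blast
    have Cr0: "\<forall>l<k. C' i0 l = 0"
    proof -
      obtain z where z: "\<forall>l<k. (\<Sum>j<q. D' l j * z j) = C' i0 l" using spec[OF sz, of "\<lambda>l. C' i0 l"] by blast
      show ?thesis
      proof (rule inj_from_surj[where k=k and p=q and y=z and C="\<lambda>j l. D' l j"])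
        show "\<forall>l<k. (\<Sum>j<q. z j * D' l j) = C' i0 l" using z by (simp add: mult.commute)
        show "\<forall>j<q. (\<Sum>l<k. D' l j * C' i0 l) = 0" 
        proof (intro allI impI)
          fix j assume "j < q"
          have "(\<Sum>l<k. D' l j * C' i0 l) = (\<Sum>l<k. C' i0 l * D' l j)" by (simp add: mult.commute)
          also have "\<dots> = A' i0 j" using fac ij \<open>j < q\<close> by simp
          finally show "(\<Sum>l<k. D' l j * C' i0 l) = 0" using r0 by simp
        qed
      qed
    qed
    have Dc0: "\<forall>l<k. D' l j0 = 0"
    proof -
      obtain y where y: "\<forall>l<k. (\<Sum>i<p. y i * C' i l) = D' l j0" using spec[OF sy, of "\<lambda>l. D' l j0"] by blast
      show ?thesis
      proof (rule inj_from_surj[where k=k and p=p and y=y and C=C'])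
        show "\<forall>l<k. (\<Sum>i<p. y i * C' i l) = D' l j0" using y by blast
        show "\<forall>i<p. (\<Sum>l<k. C' i l * D' l j0) = 0"
        proof (intro allI impI)
          fix i assume "i < p"
          have "(\<Sum>l<k. C' i l * D' l j0) = A' i j0" using fac ij \<open>i < p\<close> by simp
          then show "(\<Sum>l<k. C' i l * D' l j0) = 0" using c0 by simp
        qed
      qed
    qed
    define C where "C = (\<lambda>i l. case l of 0 \<Rightarrow> A i j0 / a | Suc l' \<Rightarrow> C' i l')"
    define D where "D = (\<lambda>l j. case l of 0 \<Rightarrow> A i0 j | Suc l' \<Rightarrow> D' l' j)"
    have "\<forall>i<p. \<forall>j<q. A i j = (\<Sum>l<Suc k. C i l * D l j)"
    proof (intro allI impI)
      fix i j assume "i < p" "j < q"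
      have "(\<Sum>l<Suc k. C i l * D l j) = A i j0 / a * A i0 j + (\<Sum>l<k. C' i l * D' l j)"
        unfolding sum.lessThan_Suc_shift by (simp add: C_def D_def)
      also have "\<dots> = A i j"
      proof -
        have "A' i j = (\<Sum>l<k. C' i l * D' l j)" using fac \<open>i < p\<close> \<open>j < q\<close> by blast
        then show ?thesis unfolding A'_def by simp
      qed
      finally show "A i j = (\<Sum>l<Suc k. C i l * D l j)" by simp
    qed
    moreover have "\<forall>t. \<exists>y. \<forall>l<Suc k. (\<Sum>i<p. y i * C i l) = t l"
    proof
      fix t :: "nat \<Rightarrow> real"
      obtain y' where y': "\<forall>l<k. (\<Sum>i<p. y' i * C' i l) = t (Suc l)" using spec[OF sy, of "\<lambda>l. t (Suc l)"] by blast
      define s where "s = t 0 - (\<Sum>i<p. y' i * C i 0)"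
      define y where "y = (\<lambda>i. y' i + (if i = i0 then s else 0))"
      have "(\<Sum>i<p. y i * C i l) = (\<Sum>i<p. y' i * C i l) + s * C i0 l" for l
      proof -
        have "(\<Sum>i<p. y i * C i l) = (\<Sum>i<p. y' i * C i l) + (\<Sum>i<p. (if i = i0 then s * C i l else 0))"
        proof -
          have "(\<Sum>i<p. y i * C i l) = (\<Sum>i<p. y' i * C i l + (if i = i0 then s * C i l else 0))"
            by (rule sum.cong) (auto simp: y_def algebra_simps)
          then show ?thesis by (simp only: sum.distrib)
        qed
        also have "(\<Sum>i<p. (if i = i0 then s * C i l else 0)) = s * C i0 l" using ij by simp
        finally show ?thesis .
      qed
      moreover have "C i0 0 = 1" unfolding C_def a_def using ij by simp
      moreover have "C i0 (Suc l) = 0" if "l < k" for l unfolding C_def using Cr0 that by simp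
      note facts = calculation this
      have "\<forall>l<Suc k. (\<Sum>i<p. y i * C i l) = t l"
      proof (intro allI impI)
        fix l assume l: "l < Suc k"
        show "(\<Sum>i<p. y i * C i l) = t l"
        proof (cases l)
          case 0 then show ?thesis using facts(1)[of 0] facts(2) unfolding s_def by simp
        next
          case (Suc l')
          then have "l' < k" using l by simp
          have "C i l = C' i l'" for i unfolding C_def Suc by simp
          then show ?thesis using facts(1)[of l] facts(3)[OF \<open>l' < k\<close>] y' \<open>l' < k\<close> Suc by simp
        qed
      qed
      then show "\<exists>y. \<forall>l<Suc k. (\<Sum>i<p. y i * C i l) = t l" by blast
    qed
    moreover have "\<forall>g. \<exists>z. \<forall>l<Suc k. (\<Sum>j<q. D l j * z j) = g l"
    proof
      fix g :: "nat \<Rightarrow> real"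
      obtain z' where z': "\<forall>l<k. (\<Sum>j<q. D' l j * z' j) = g (Suc l)" using spec[OF sz, of "\<lambda>l. g (Suc l)"] by blast
      define s where "s = (g 0 - (\<Sum>j<q. D 0 j * z' j)) / a"
      define z where "z = (\<lambda>j. z' j + (if j = j0 then s else 0))"
      have "(\<Sum>j<q. D l j * z j) = (\<Sum>j<q. D l j * z' j) + D l j0 * s" for l
      proof -
        have "(\<Sum>j<q. D l j * z j) = (\<Sum>j<q. D l j * z' j) + (\<Sum>j<q. (if j = j0 then D l j * s else 0))"
        proof -
          have "(\<Sum>j<q. D l j * z j) = (\<Sum>j<q. D l j * z' j + (if j = j0 then D l j * s else 0))"
            by (rule sum.cong) (auto simp: z_def algebra_simps)
          then show ?thesis by (simp only: sum.distrib)
        qed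
        also have "(\<Sum>j<q. (if j = j0 then D l j * s else 0)) = D l j0 * s" using ij by simp
        finally show ?thesis .
      qed
      moreover have "D 0 j0 = a" unfolding D_def a_def by simp
      moreover have "D (Suc l) j0 = 0" if "l < k" for l unfolding D_def using Dc0 that by simp
      moreover have "a \<noteq> 0" using ij a_def by simp
      note facts = calculation this
      have "\<forall>l<Suc k. (\<Sum>j<q. D l j * z j) = g l"
      proof (intro allI impI)
        fix l assume l: "l < Suc k"
        show "(\<Sum>j<q. D l j * z j) = g l"
        proof (cases l)
          case 0 then show ?thesis using facts(1)[of 0] facts(2) facts(4) unfolding s_def by simp
        next
          case (Suc l')
          then have "l' < k" using l by simp
          have "D l j = D' l' j" for j unfolding D_def Suc by simp
          then show ?thesis using facts(1)[of l] facts(3)[OF \<open>l' < k\<close>] z' \<open>l' < k\<close> Suc by simp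
        qed
      qed
      then show "\<exists>z. \<forall>l<Suc k. (\<Sum>j<q. D l j * z j) = g l" by blast
    qed
    ultimately show ?thesis by blast
  qed
qed




definition inP :: "nat \<Rightarrow> nat \<Rightarrow> (nat \<Rightarrow> nat \<Rightarrow> real) \<Rightarrow> (nat \<Rightarrow> real) \<Rightarrow> bool" where
  "inP p n v x \<longleftrightarrow> (\<exists>lam. (\<forall>i<p. lam i \<ge> 0) \<and> (\<Sum>i<p. lam i) = 1 \<and> (\<forall>l<n. x l = (\<Sum>i<p. lam i * v i l)))"

definition inQ :: "nat \<Rightarrow> nat \<Rightarrow> (nat \<Rightarrow> nat \<Rightarrow> real) \<Rightarrow> (nat \<Rightarrow> real) \<Rightarrow> (nat \<Rightarrow> real) \<Rightarrow> bool" where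
  "inQ q n W w x \<longleftrightarrow> (\<forall>j<q. (\<Sum>l<n. W j l * x l) \<le> w j)"

lemma sumB: "(\<Sum>i\<in>B ` A. f i) = (\<Sum>j\<in>A. f (B j))"
  by (simp add: sum.reindex inj_on_def)

lemma swap_mul: "(\<Sum>i\<in>A. (a i::real) * (\<Sum>l\<in>L. b i l)) = (\<Sum>l\<in>L. \<Sum>i\<in>A. a i * b i l)"
  by (simp add: sum_distrib_left) (rule sum.swap)

lemma inP_bound:
  assumes "inP p n v x" "l < n"
  shows "\<bar>x l\<bar> \<le> (\<Sum>i<p. \<bar>v i l\<bar>)"
proof -
  obtain lam where l: "\<forall>i<p. lam i \<ge> 0" "(\<Sum>i<p. lam i) = 1" "\<forall>l<n. x l = (\<Sum>i<p. lam i * v i l)"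
    using assms(1) unfolding inP_def by blast
  have le1: "lam i \<le> 1" if "i < p" for i
  proof -
    have "lam i \<le> (\<Sum>i<p. lam i)" using l(1) that by (intro member_le_sum) auto
    then show ?thesis using l(2) by simp
  qed
  have "\<bar>x l\<bar> = \<bar>\<Sum>i<p. lam i * v i l\<bar>" using l(3) assms(2) by simp
  also have "\<dots> \<le> (\<Sum>i<p. \<bar>lam i * v i l\<bar>)" by (rule sum_abs)
  also have "\<dots> \<le> (\<Sum>i<p. \<bar>v i l\<bar>)"
  proof (rule sum_mono)
    fix i assume "i \<in> {..<p}"
    then have "lam i \<ge> 0" "lam i \<le> 1" using l(1) le1 by auto
    then show "\<bar>lam i * v i l\<bar> \<le> \<bar>v i l\<bar>" by (simp add: abs_mult mult_left_le_one_le)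
  qed
  finally show ?thesis .
qed

locale slackdata =
  fixes p q n :: nat and v W :: "nat \<Rightarrow> nat \<Rightarrow> real" and w :: "nat \<Rightarrow> real"
  assumes PQ: "\<And>x. inP p n v x \<longleftrightarrow> inQ q n W w x"
    and dim: "\<exists>x y. inP p n v x \<and> inP p n v y \<and> (\<exists>l<n. x l \<noteq> y l)"
begin

definition S where "S i j = w j - (\<Sum>l<n. W j l * v i l)"

lemma rec0:
  assumes d: "\<forall>j<q. (\<Sum>l<n. W j l * d l) \<le> 0"
  shows "\<forall>l<n. d l = 0"
proof (intro allI impI, rule ccontr)
  fix l assume l: "l < n" "d l \<noteq> 0"
  obtain x0 where x0: "inP p n v x0" using dim by blast
  define Bd where "Bd = (\<Sum>i<p. \<bar>v i l\<bar>)"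
  define t where "t = (Bd + \<bar>x0 l\<bar> + 1) / \<bar>d l\<bar>"
  define x where "x = (\<lambda>l. x0 l + t * d l)"
  have t0: "t \<ge> 0" unfolding t_def Bd_def by (auto intro!: divide_nonneg_pos add_nonneg_nonneg sum_nonneg simp: l)
  have "inQ q n W w x0" using x0 PQ by blast
  have "inQ q n W w x" unfolding inQ_def
  proof (intro allI impI)
    fix j assume j: "j < q"
    have "(\<Sum>l<n. W j l * x l) = (\<Sum>l<n. W j l * x0 l) + t * (\<Sum>l<n. W j l * d l)"
      unfolding x_def by (simp add: algebra_simps sum.distrib sum_distrib_left)
    also have "\<dots> \<le> w j + t * 0"
      using \<open>inQ q n W w x0\<close> j d t0 unfolding inQ_def by (intro add_mono mult_left_mono) auto
    finally show "(\<Sum>l<n. W j l * x l) \<le> w j" by simp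
  qed
  then have "inP p n v x" using PQ by blast
  then have "\<bar>x l\<bar> \<le> Bd" using inP_bound l unfolding Bd_def by blast
  moreover have "t * \<bar>d l\<bar> = Bd + \<bar>x0 l\<bar> + 1" unfolding t_def using l by simp
  moreover have "\<bar>x l\<bar> \<ge> t * \<bar>d l\<bar> - \<bar>x0 l\<bar>"
  proof -
    have "\<bar>t * d l\<bar> \<le> \<bar>x l\<bar> + \<bar>x0 l\<bar>" unfolding x_def by linarith
    then show ?thesis using t0 by (simp add: abs_mult)
  qed
  ultimately show False by linarith
qed

lemma noabove: "\<not> (\<exists>y. \<forall>j<q. (\<Sum>l<n. W j l * y l) \<ge> w j)"
proof
  assume "\<exists>y. \<forall>j<q. (\<Sum>l<n. W j l * y l) \<ge> w j"
  then obtain y where y: "\<forall>j<q. (\<Sum>l<n. W j l * y l) \<ge> w j" by blast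
  have eq: "\<forall>l<n. x l = y l" if "inP p n v x" for x
  proof -
    have "inQ q n W w x" using that PQ by blast
    have "\<forall>j<q. (\<Sum>l<n. W j l * (x l - y l)) \<le> 0"
    proof (intro allI impI)
      fix j assume "j < q"
      have "(\<Sum>l<n. W j l * (x l - y l)) = (\<Sum>l<n. W j l * x l) - (\<Sum>l<n. W j l * y l)"
        by (simp add: algebra_simps sum_subtractf)
      then show "(\<Sum>l<n. W j l * (x l - y l)) \<le> 0"
        using \<open>inQ q n W w x\<close> y \<open>j < q\<close> unfolding inQ_def by fastforce
    qed
    then show ?thesis using rec0[of "\<lambda>l. x l - y l"] by simp
  qed
  obtain x1 x2 l where "inP p n v x1" "inP p n v x2" "l < n" "x1 l \<noteq> x2 l" using dim by blast
  then show False using eq by metis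
qed

lemma S_comb: "(\<Sum>i<p. lam i * S i j) = (\<Sum>i<p. lam i) * w j - (\<Sum>l<n. W j l * (\<Sum>i<p. lam i * v i l))"
proof -
  have "(\<Sum>i<p. lam i * S i j) = (\<Sum>i<p. lam i * w j) - (\<Sum>i<p. lam i * (\<Sum>l<n. W j l * v i l))"
    unfolding S_def by (simp add: algebra_simps sum_subtractf)
  also have "(\<Sum>i<p. lam i * (\<Sum>l<n. W j l * v i l)) = (\<Sum>l<n. W j l * (\<Sum>i<p. lam i * v i l))"
    by (simp add: swap_mul sum_distrib_left algebra_simps) (rule sum.swap)
  finally show ?thesis by (simp add: sum_distrib_right)
qed

lemma S_comb2: "(\<Sum>j<q. S i j * z j) = (\<Sum>j<q. z j * w j) - (\<Sum>l<n. (\<Sum>j<q. z j * W j l) * v i l)"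
proof -
  have "(\<Sum>j<q. S i j * z j) = (\<Sum>j<q. z j * w j) - (\<Sum>j<q. z j * (\<Sum>l<n. W j l * v i l))"
    unfolding S_def by (simp add: algebra_simps sum_subtractf)
  also have "(\<Sum>j<q. z j * (\<Sum>l<n. W j l * v i l)) = (\<Sum>l<n. (\<Sum>j<q. z j * W j l) * v i l)"
    by (simp add: swap_mul sum_distrib_right algebra_simps) (rule sum.swap)
  finally show ?thesis .
qed

lemma one: "\<exists>z. (\<forall>j<q. z j \<ge> 0) \<and> (\<forall>i<p. (\<Sum>j<q. S i j * z j) = 1)"
proof -
  define G where "G = (\<lambda>k l. case k of B j \<Rightarrow> W j l | _ \<Rightarrow> 0)"
  define h where "h = (\<lambda>k. case k of B j \<Rightarrow> w j | _ \<Rightarrow> 0)"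
  have "\<not> (\<exists>y. \<forall>i\<in>B ` {..<q}. (\<Sum>l<n. G i l * y l) \<ge> h i)"
    using noabove unfolding G_def h_def by auto
  from farkas[OF _ this] obtain \<mu> where mu: "\<forall>i\<in>B ` {..<q}. \<mu> i \<ge> 0"
    "\<forall>l<n. (\<Sum>i\<in>B ` {..<q}. \<mu> i * G i l) = 0" "(\<Sum>i\<in>B ` {..<q}. \<mu> i * h i) > 0" by auto
  define \<sigma> where "\<sigma> = (\<Sum>j<q. \<mu> (B j) * w j)"
  have s: "\<sigma> > 0" using mu(3) unfolding \<sigma>_def sumB h_def by simp
  have W0: "(\<Sum>j<q. \<mu> (B j) * W j l) = 0" if "l < n" for l using mu(2) that unfolding sumB G_def by simp
  define z where "z = (\<lambda>j. \<mu> (B j) / \<sigma>)"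
  have "\<forall>j<q. z j \<ge> 0" using mu(1) s unfolding z_def by auto
  moreover have "\<forall>i<p. (\<Sum>j<q. S i j * z j) = 1"
  proof (intro allI impI)
    fix i assume "i < p"
    have "(\<Sum>j<q. S i j * z j) = (\<Sum>j<q. z j * w j) - (\<Sum>l<n. (\<Sum>j<q. z j * W j l) * v i l)" by (rule S_comb2)
    also have "(\<Sum>j<q. z j * w j) = 1" unfolding z_def using s by (simp add: sum_divide_distrib[symmetric] \<sigma>_def)
    also have "(\<Sum>l<n. (\<Sum>j<q. z j * W j l) * v i l) = 0"
    proof (rule sum.neutral, intro ballI)
      fix l assume "l \<in> {..<n}"
      have "(\<Sum>j<q. z j * W j l) = (\<Sum>j<q. \<mu> (B j) * W j l) / \<sigma>" unfolding z_def by (simp add: sum_divide_distrib)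
      then show "(\<Sum>j<q. z j * W j l) * v i l = 0" using W0 \<open>l \<in> {..<n}\<close> by simp
    qed
    finally show "(\<Sum>j<q. S i j * z j) = 1" by simp
  qed
  ultimately show ?thesis by blast
qed

lemma fwR:
  assumes y: "\<forall>j<q. (\<Sum>i<p. y i * S i j) \<ge> 0"
  shows "\<exists>lam. (\<forall>i<p. lam i \<ge> 0) \<and> (\<forall>j<q. (\<Sum>i<p. lam i * S i j) = (\<Sum>i<p. y i * S i j))"
proof -
  define s where "s = (\<Sum>i<p. y i)"
  define u where "u = (\<lambda>l. \<Sum>i<p. y i * v i l)"
  have yS: "(\<Sum>i<p. y i * S i j) = s * w j - (\<Sum>l<n. W j l * u l)" for j
    unfolding s_def u_def by (rule S_comb)
  consider "s > 0" | "s = 0" | "s < 0" by linarith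
  then show ?thesis
  proof cases
    case 1
    define x where "x = (\<lambda>l. u l / s)"
    have "inQ q n W w x" unfolding inQ_def
    proof (intro allI impI)
      fix j assume "j < q"
      have "(\<Sum>l<n. W j l * x l) = (\<Sum>l<n. W j l * u l) / s" unfolding x_def by (simp add: sum_divide_distrib)
      also have "\<dots> \<le> w j"
      proof -
        have "0 \<le> s * w j - (\<Sum>l<n. W j l * u l)" using y[rule_format, OF \<open>j < q\<close>] unfolding yS .
        then show ?thesis using 1 by (simp add: pos_divide_le_eq mult.commute)
      qed
      finally show "(\<Sum>l<n. W j l * x l) \<le> w j" .
    qed
    then have "inP p n v x" using PQ by blast
    then obtain lam where lam: "\<forall>i<p. lam i \<ge> 0" "(\<Sum>i<p. lam i) = 1" "\<forall>l<n. x l = (\<Sum>i<p. lam i * v i l)"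
      unfolding inP_def by blast
    define lam' where "lam' = (\<lambda>i. s * lam i)"
    have "\<forall>i<p. lam' i \<ge> 0" using lam(1) 1 unfolding lam'_def by auto
    moreover have "\<forall>j<q. (\<Sum>i<p. lam' i * S i j) = (\<Sum>i<p. y i * S i j)"
    proof (intro allI impI)
      fix j assume "j < q"
      have "(\<Sum>i<p. lam' i * S i j) = (\<Sum>i<p. lam' i) * w j - (\<Sum>l<n. W j l * (\<Sum>i<p. lam' i * v i l))"
        by (rule S_comb)
      also have "(\<Sum>i<p. lam' i) = s" unfolding lam'_def using lam(2) by (simp add: sum_distrib_left[symmetric])
      also have "(\<Sum>l<n. W j l * (\<Sum>i<p. lam' i * v i l)) = (\<Sum>l<n. W j l * u l)"
      proof (rule sum.cong)
        fix l assume "l \<in> {..<n}"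
        have "(\<Sum>i<p. lam' i * v i l) = s * x l" using lam(3) \<open>l \<in> {..<n}\<close> unfolding lam'_def
          by (simp add: sum_distrib_left mult.assoc)
        then show "W j l * (\<Sum>i<p. lam' i * v i l) = W j l * u l" unfolding x_def using 1 by simp
      qed simp
      finally show "(\<Sum>i<p. lam' i * S i j) = (\<Sum>i<p. y i * S i j)" using yS by simp
    qed
    ultimately show ?thesis by blast
  next
    case 2
    have "\<forall>j<q. (\<Sum>l<n. W j l * u l) \<le> 0" using y yS 2 by fastforce
    then have u0: "\<forall>l<n. u l = 0" by (rule rec0)
    have "\<forall>j<q. (\<Sum>i<p. y i * S i j) = 0" using yS 2 u0 by simp
    then show ?thesis by (intro exI[of _ "\<lambda>_. 0"]) simp
  next
    case 3
    define x where "x = (\<lambda>l. u l / s)"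
    have "\<forall>j<q. (\<Sum>l<n. W j l * x l) \<ge> w j"
    proof (intro allI impI)
      fix j assume "j < q"
      have "(\<Sum>l<n. W j l * x l) = (\<Sum>l<n. W j l * u l) / s" unfolding x_def by (simp add: sum_divide_distrib)
      also have "\<dots> \<ge> w j"
      proof -
        have "0 \<le> s * w j - (\<Sum>l<n. W j l * u l)" using y[rule_format, OF \<open>j < q\<close>] unfolding yS .
        then show ?thesis using 3 by (simp add: neg_le_divide_eq mult.commute)
      qed
      finally show "(\<Sum>l<n. W j l * x l) \<ge> w j" .
    qed
    then show ?thesis using noabove by blast
  qed
qed

lemma fwC:
  assumes z: "\<forall>i<p. (\<Sum>j<q. S i j * z j) \<ge> 0"
  shows "\<exists>z'. (\<forall>j<q. z' j \<ge> 0) \<and> (\<forall>i<p. (\<Sum>j<q. S i j * z' j) = (\<Sum>j<q. S i j * z j))"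
proof -
  define c where "c = (\<Sum>j<q. z j * w j)"
  define g where "g = (\<lambda>l. \<Sum>j<q. z j * W j l)"
  have Sz: "(\<Sum>j<q. S i j * z j) = c - (\<Sum>l<n. g l * v i l)" for i
    unfolding c_def g_def by (rule S_comb2)
  define Gn where "Gn = (\<lambda>j l. if j < q then (if l < n then - W j l else w j)
      else if j = q then (if l = n then 1 else 0) else (if l < n then g l else - c))"
  define hn where "hn = (\<lambda>j. if j = Suc q then (1::real) else 0)"
  define G where "G = (\<lambda>k l. case k of B j \<Rightarrow> Gn j l | _ \<Rightarrow> 0)"
  define h where "h = (\<lambda>k. case k of B j \<Rightarrow> hn j | _ \<Rightarrow> 0)"
  have rowsum: "(\<Sum>l<Suc n. Gn j l * y l) = (if j < q then - (\<Sum>l<n. W j l * y l) + w j * y n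
      else if j = q then y n else (\<Sum>l<n. g l * y l) - c * y n)" for j y
  proof -
    have "(\<Sum>l<Suc n. Gn j l * y l) = (\<Sum>l<n. Gn j l * y l) + Gn j n * y n" by simp
    also have "(\<Sum>l<n. Gn j l * y l) = (if j < q then - (\<Sum>l<n. W j l * y l) else if j = q then 0 else (\<Sum>l<n. g l * y l))"
      unfolding Gn_def by (auto simp: sum_negf)
    finally show ?thesis unfolding Gn_def by auto
  qed
  have "\<not> (\<exists>y. \<forall>k\<in>B ` {..<Suc (Suc q)}. (\<Sum>l<Suc n. G k l * y l) \<ge> h k)"
  proof
    assume "\<exists>y. \<forall>k\<in>B ` {..<Suc (Suc q)}. (\<Sum>l<Suc n. G k l * y l) \<ge> h k"
    then obtain y where y: "\<forall>j<Suc (Suc q). (\<Sum>l<Suc n. Gn j l * y l) \<ge> hn j"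
      unfolding G_def h_def by auto
    have r1: "- (\<Sum>l<n. W j l * y l) + w j * y n \<ge> 0" if "j < q" for j
      using y[rule_format, of j] that rowsum[of j y] unfolding hn_def by auto
    have r2: "y n \<ge> 0" using y[rule_format, of q] rowsum[of q y] unfolding hn_def by auto
    have r3: "(\<Sum>l<n. g l * y l) - c * y n \<ge> 1" using y[rule_format, of "Suc q"] rowsum[of "Suc q" y] unfolding hn_def by auto
    show False
    proof (cases "y n = 0")
      case True
      then have "\<forall>j<q. (\<Sum>l<n. W j l * y l) \<le> 0" using r1 by fastforce
      then have "\<forall>l<n. y l = 0" by (rule rec0)
      then show False using r3 True by simp
    next
      case False
      then have tp: "y n > 0" using r2 by simp
      define x where "x = (\<lambda>l. y l / y n)"
      have "inQ q n W w x" unfolding inQ_def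
      proof (intro allI impI)
        fix j assume "j < q"
        have "(\<Sum>l<n. W j l * x l) = (\<Sum>l<n. W j l * y l) / y n" unfolding x_def by (simp add: sum_divide_distrib)
        also have "\<dots> \<le> w j" using r1[OF \<open>j < q\<close>] tp by (simp add: divide_simps mult.commute)
        finally show "(\<Sum>l<n. W j l * x l) \<le> w j" .
      qed
      then have "inP p n v x" using PQ by blast
      then obtain lam where lam: "\<forall>i<p. lam i \<ge> 0" "(\<Sum>i<p. lam i) = 1" "\<forall>l<n. x l = (\<Sum>i<p. lam i * v i l)"
        unfolding inP_def by blast
      have "(\<Sum>l<n. g l * x l) = (\<Sum>i<p. lam i * (\<Sum>l<n. g l * v i l))"
        using lam(3) by (simp add: swap_mul sum_distrib_left algebra_simps) (rule sum.swap)
      also have "\<dots> \<le> (\<Sum>i<p. lam i * c)"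
      proof (rule sum_mono)
        fix i assume "i \<in> {..<p}"
        then have "(\<Sum>l<n. g l * v i l) \<le> c" using z Sz[of i] by fastforce
        then show "lam i * (\<Sum>l<n. g l * v i l) \<le> lam i * c" using lam(1) \<open>i \<in> {..<p}\<close> by (simp add: mult_left_mono)
      qed
      also have "\<dots> = c" using lam(2) by (simp add: sum_distrib_right[symmetric])
      finally have "(\<Sum>l<n. g l * x l) \<le> c" .
      have "(\<Sum>l<n. g l * y l) = y n * (\<Sum>l<n. g l * x l)"
      proof -
        have "y n * (\<Sum>l<n. g l * x l) = (\<Sum>l<n. y n * (g l * x l))" by (rule sum_distrib_left)
        also have "\<dots> = (\<Sum>l<n. g l * y l)" unfolding x_def using tp by (intro sum.cong) auto
        finally show ?thesis by simp
      qed
      also have "y n * (\<Sum>l<n. g l * x l) \<le> y n * c" using \<open>(\<Sum>l<n. g l * x l) \<le> c\<close> tp by simp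
      finally have "(\<Sum>l<n. g l * y l) \<le> y n * c" .
      then show False using r3 by (simp add: mult.commute)
    qed
  qed
  from farkas[OF _ this] obtain \<mu> where mu: "\<forall>k\<in>B ` {..<Suc (Suc q)}. \<mu> k \<ge> 0"
    "\<forall>l<Suc n. (\<Sum>k\<in>B ` {..<Suc (Suc q)}. \<mu> k * G k l) = 0" "(\<Sum>k\<in>B ` {..<Suc (Suc q)}. \<mu> k * h k) > 0" by auto
  define m where "m = (\<lambda>j. \<mu> (B j))"
  have m0: "\<forall>j<Suc (Suc q). m j \<ge> 0" using mu(1) unfolding m_def by auto
  have mG: "\<forall>l<Suc n. (\<Sum>j<Suc (Suc q). m j * Gn j l) = 0" using mu(2) unfolding m_def sumB G_def by simp
  have "(\<Sum>j<Suc (Suc q). m j * hn j) > 0" using mu(3) unfolding m_def sumB h_def by simp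
  then have nu: "m (Suc q) > 0" unfolding hn_def by (simp add: if_distrib cong: if_cong)
  define \<nu> where "\<nu> = m (Suc q)"
  define \<rho> where "\<rho> = m q"
  have rho: "\<rho> \<ge> 0" using m0 unfolding \<rho>_def by auto
  have eql: "(\<Sum>j<q. m j * W j l) = \<nu> * g l" if "l < n" for l
  proof -
    have "0 = (\<Sum>j<Suc (Suc q). m j * Gn j l)" using mG that by simp
    also have "\<dots> = (\<Sum>j<q. m j * Gn j l) + m q * Gn q l + m (Suc q) * Gn (Suc q) l" by simp
    also have "(\<Sum>j<q. m j * Gn j l) = - (\<Sum>j<q. m j * W j l)" unfolding Gn_def using that by (simp add: sum_negf)
    finally show ?thesis unfolding Gn_def \<nu>_def using that by simp
  qed
  have eqn: "(\<Sum>j<q. m j * w j) + \<rho> - \<nu> * c = 0"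
  proof -
    have "0 = (\<Sum>j<Suc (Suc q). m j * Gn j n)" using mG by simp
    also have "\<dots> = (\<Sum>j<q. m j * Gn j n) + m q * Gn q n + m (Suc q) * Gn (Suc q) n" by simp
    also have "(\<Sum>j<q. m j * Gn j n) = (\<Sum>j<q. m j * w j)" unfolding Gn_def by simp
    finally show ?thesis unfolding Gn_def \<nu>_def \<rho>_def by simp
  qed
  obtain z1 where z1: "\<forall>j<q. z1 j \<ge> 0" "\<forall>i<p. (\<Sum>j<q. S i j * z1 j) = 1" using one by blast
  define z' where "z' = (\<lambda>j. m j / \<nu> + (\<rho> / \<nu>) * z1 j)"
  have "\<forall>j<q. z' j \<ge> 0" using m0 z1(1) nu rho unfolding z'_def \<nu>_def by auto
  moreover have "\<forall>i<p. (\<Sum>j<q. S i j * z' j) = (\<Sum>j<q. S i j * z j)"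
  proof (intro allI impI)
    fix i assume "i < p"
    have "(\<Sum>j<q. S i j * z' j) = (\<Sum>j<q. S i j * m j) / \<nu> + (\<rho> / \<nu>) * (\<Sum>j<q. S i j * z1 j)"
      unfolding z'_def by (simp add: algebra_simps sum.distrib sum_distrib_left sum_divide_distrib)
    also have "(\<Sum>j<q. S i j * z1 j) = 1" using z1(2) \<open>i < p\<close> by simp
    also have "(\<Sum>j<q. S i j * m j) = (\<Sum>j<q. m j * w j) - (\<Sum>l<n. (\<Sum>j<q. m j * W j l) * v i l)" by (rule S_comb2)
    also have "(\<Sum>l<n. (\<Sum>j<q. m j * W j l) * v i l) = \<nu> * (\<Sum>l<n. g l * v i l)"
      using eql by (simp add: sum_distrib_left mult.assoc)
    also have "(\<Sum>j<q. m j * w j) = \<nu> * c - \<rho>" using eqn by simp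
    finally have "(\<Sum>j<q. S i j * z' j) = ((\<nu> * c - \<rho>) - \<nu> * (\<Sum>l<n. g l * v i l)) / \<nu> + (\<rho> / \<nu>) * 1" .
    also have "\<dots> = c - (\<Sum>l<n. g l * v i l)" using nu unfolding \<nu>_def by (simp add: field_simps)
    finally have "(\<Sum>j<q. S i j * z' j) = c - (\<Sum>l<n. g l * v i l)" .
    then show "(\<Sum>j<q. S i j * z' j) = (\<Sum>j<q. S i j * z j)" using Sz by simp
  qed
  ultimately show ?thesis by blast
qed

end




lemma ind_sum: "(i::nat) < p \<Longrightarrow> (\<Sum>i'<p. (if i' = i then 1 else 0) * (f i'::real)) = f i"
proof -
  assume "i < p"
  have "(\<Sum>i'<p. (if i' = i then 1 else 0) * f i') = (\<Sum>i'<p. if i' = i then f i' else 0)" by (rule sum.cong) auto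
  then show ?thesis using \<open>i < p\<close> by (simp add: sum.delta)
qed

locale convdata =
  fixes p q k :: nat and m C D :: "nat \<Rightarrow> nat \<Rightarrow> real" and z0 :: "nat \<Rightarrow> real"
  assumes p0: "0 < p"
    and nonneg: "\<forall>i<p. \<forall>j<q. m i j \<ge> 0"
    and O: "\<forall>i<p. (\<Sum>j<q. m i j * z0 j) = 1"
    and fac: "\<forall>i<p. \<forall>j<q. m i j - m 0 j = (\<Sum>l<k. C i l * D l j)"
    and sy: "\<forall>t. \<exists>y. \<forall>l<k. (\<Sum>i<p. y i * C i l) = t l"
    and sz: "\<forall>g. \<exists>z. \<forall>l<k. (\<Sum>j<q. D l j * z j) = g l"
begin

definition W where "W j l = - D l j"
definition w where "w j = m 0 j"

lemma injC: "\<forall>i<p. (\<Sum>l<k. C i l * u l) = 0 \<Longrightarrow> \<forall>l<k. u l = 0"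
proof -
  assume a: "\<forall>i<p. (\<Sum>l<k. C i l * u l) = 0"
  obtain y where y: "\<forall>l<k. (\<Sum>i<p. y i * C i l) = u l" using spec[OF sy, of u] by blast
  show ?thesis by (rule inj_from_surj[where C=C and y=y]) (use y a in auto)
qed

lemma injD: "\<forall>j<q. (\<Sum>l<k. D l j * u l) = 0 \<Longrightarrow> \<forall>l<k. u l = 0"
proof -
  assume a: "\<forall>j<q. (\<Sum>l<k. D l j * u l) = 0"
  obtain z where z: "\<forall>l<k. (\<Sum>j<q. D l j * z j) = u l" using spec[OF sz, of u] by blast
  show ?thesis
  proof (rule inj_from_surj[where C="\<lambda>j l. D l j" and y=z and p=q])
    show "\<forall>l<k. (\<Sum>j<q. z j * D l j) = u l" using z by (simp add: mult.commute)
  qed (use a in auto)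
qed

lemma NC: "i < p \<Longrightarrow> (\<Sum>j<q. (m i j - m 0 j) * f j) = (\<Sum>l<k. C i l * (\<Sum>j<q. D l j * f j))"
proof -
  assume "i < p"
  have "(\<Sum>j<q. (m i j - m 0 j) * f j) = (\<Sum>j<q. (\<Sum>l<k. C i l * D l j) * f j)"
    using fac \<open>i < p\<close> by (intro sum.cong) auto
  also have "\<dots> = (\<Sum>l<k. C i l * (\<Sum>j<q. D l j * f j))"
    by (simp add: sum_distrib_right sum_distrib_left mult.assoc) (rule sum.swap)
  finally show ?thesis .
qed

lemma Dlam: "j < q \<Longrightarrow> (\<Sum>l<k. D l j * (\<Sum>i<p. lam i * C i l)) = (\<Sum>i<p. lam i * (m i j - m 0 j))"
proof -
  assume "j < q"
  have "(\<Sum>i<p. lam i * (m i j - m 0 j)) = (\<Sum>i<p. lam i * (\<Sum>l<k. C i l * D l j))"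
    using fac \<open>j < q\<close> by (intro sum.cong) auto
  also have "\<dots> = (\<Sum>l<k. D l j * (\<Sum>i<p. lam i * C i l))"
    by (simp add: sum_distrib_right sum_distrib_left algebra_simps) (rule sum.swap)
  finally show ?thesis by simp
qed

lemma C0: "\<forall>l<k. C 0 l = 0"
proof (rule injD, intro allI impI)
  fix j assume "j < q"
  have "(\<Sum>l<k. D l j * C 0 l) = (\<Sum>l<k. C 0 l * D l j)" by (simp add: mult.commute)
  also have "\<dots> = m 0 j - m 0 j" using fac[rule_format, OF p0 \<open>j < q\<close>] by simp
  finally show "(\<Sum>l<k. D l j * C 0 l) = 0" by simp
qed

lemma Dz0: "\<forall>l<k. (\<Sum>j<q. D l j * z0 j) = 0"
proof (rule injC, intro allI impI)
  fix i assume "i < p"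
  have "(\<Sum>l<k. C i l * (\<Sum>j<q. D l j * z0 j)) = (\<Sum>j<q. (m i j - m 0 j) * z0 j)" using NC \<open>i < p\<close> by simp
  also have "\<dots> = (\<Sum>j<q. m i j * z0 j) - (\<Sum>j<q. m 0 j * z0 j)" by (simp add: algebra_simps sum_subtractf)
  also have "\<dots> = 0" using O \<open>i < p\<close> p0 by simp
  finally show "(\<Sum>l<k. C i l * (\<Sum>j<q. D l j * z0 j)) = 0" .
qed

lemma match: "i < p \<Longrightarrow> j < q \<Longrightarrow> m i j = w j - (\<Sum>l<k. W j l * C i l)"
proof -
  assume a: "i < p" "j < q"
  have "(\<Sum>l<k. W j l * C i l) = - (\<Sum>l<k. C i l * D l j)" unfolding W_def by (simp add: sum_negf mult.commute)
  then show ?thesis using fac[rule_format, OF a] unfolding w_def by simp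
qed

lemma PsubQ: "inP p k C x \<Longrightarrow> inQ q k W w x"
proof -
  assume "inP p k C x"
  then obtain lam where lam: "\<forall>i<p. lam i \<ge> 0" "(\<Sum>i<p. lam i) = 1" "\<forall>l<k. x l = (\<Sum>i<p. lam i * C i l)"
    unfolding inP_def by blast
  show ?thesis unfolding inQ_def
  proof (intro allI impI)
    fix j assume "j < q"
    have "(\<Sum>l<k. W j l * x l) = - (\<Sum>l<k. D l j * (\<Sum>i<p. lam i * C i l))"
      unfolding W_def using lam(3) by (simp add: sum_negf)
    also have "\<dots> = - (\<Sum>i<p. lam i * (m i j - m 0 j))" using Dlam \<open>j < q\<close> by simp
    also have "\<dots> = (\<Sum>i<p. lam i) * m 0 j - (\<Sum>i<p. lam i * m i j)"
    proof -
      have "(\<Sum>i<p. lam i * (m i j - m 0 j)) = (\<Sum>i<p. lam i * m i j) - (\<Sum>i<p. lam i * m 0 j)"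
        by (simp add: algebra_simps sum_subtractf)
      moreover have "(\<Sum>i<p. lam i * m 0 j) = (\<Sum>i<p. lam i) * m 0 j" by (simp add: sum_distrib_right)
      ultimately show ?thesis by simp
    qed
    also have "\<dots> \<le> m 0 j"
    proof -
      have "(\<Sum>i<p. lam i * m i j) \<ge> 0" using lam(1) nonneg \<open>j < q\<close> by (intro sum_nonneg) auto
      then show ?thesis using lam(2) by simp
    qed
    finally show "(\<Sum>l<k. W j l * x l) \<le> w j" unfolding w_def .
  qed
qed

lemma dimP:
  assumes "\<exists>i<p. \<exists>j<q. m i j \<noteq> m 0 j"
  shows "\<exists>x y. inP p k C x \<and> inP p k C y \<and> (\<exists>l<k. x l \<noteq> y l)"
proof -
  obtain i j where ij: "i < p" "j < q" "m i j \<noteq> m 0 j" using assms by blast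
  have "(\<Sum>l<k. C i l * D l j) \<noteq> 0" using fac[rule_format, OF ij(1,2)] ij(3) by simp
  then obtain l where l: "l < k" "C i l \<noteq> 0" by (metis (no_types, lifting) lessThan_iff mult_eq_0_iff sum.neutral)
  have pt: "inP p k C (\<lambda>l. C i' l)" if "i' < p" for i'
    unfolding inP_def
    by (rule exI[of _ "\<lambda>i''. if i'' = i' then 1 else 0"]) (use that ind_sum[OF that] in auto)
  have "C i l \<noteq> C 0 l" using l C0 by simp
  then show ?thesis using pt[OF ij(1)] pt[OF p0] l(1) by blast
qed

lemma QsubP_R:
  assumes R: "\<forall>y. (\<forall>j<q. (\<Sum>i<p. y i * m i j) \<ge> 0) \<longrightarrow>
     (\<exists>lam. (\<forall>i<p. lam i \<ge> 0) \<and> (\<forall>j<q. (\<Sum>i<p. lam i * m i j) = (\<Sum>i<p. y i * m i j)))"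
    and x: "inQ q k W w x"
  shows "inP p k C x"
proof -
  obtain y' where y': "\<forall>l<k. (\<Sum>i<p. y' i * C i l) = x l" using spec[OF sy, of x] by blast
  define y where "y = (\<lambda>i. y' i + (if i = 0 then 1 - (\<Sum>i<p. y' i) else 0))"
  have yC: "\<forall>l<k. (\<Sum>i<p. y i * C i l) = x l"
  proof (intro allI impI)
    fix l assume "l < k"
    have "(\<Sum>i<p. y i * C i l) = (\<Sum>i<p. y' i * C i l + (if i = 0 then (1 - (\<Sum>i<p. y' i)) * C i l else 0))"
      unfolding y_def by (intro sum.cong) (auto simp: algebra_simps)
    also have "\<dots> = (\<Sum>i<p. y' i * C i l) + (1 - (\<Sum>i<p. y' i)) * C 0 l" using p0 by (simp add: sum.distrib)
    finally show "(\<Sum>i<p. y i * C i l) = x l" using y' C0 \<open>l < k\<close> by simp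
  qed
  have ysum: "(\<Sum>i<p. y i) = 1"
  proof -
    have "(\<Sum>i<p. y i) = (\<Sum>i<p. y' i + (if i = 0 then 1 - (\<Sum>i<p. y' i) else 0))" unfolding y_def by simp
    also have "\<dots> = (\<Sum>i<p. y' i) + (1 - (\<Sum>i<p. y' i))" using p0 by (simp add: sum.distrib)
    finally show ?thesis by simp
  qed
  have combo: "(\<Sum>i<p. lam i * m i j) = (\<Sum>i<p. lam i) * m 0 j + (\<Sum>l<k. D l j * (\<Sum>i<p. lam i * C i l))"
    if "j < q" for lam j
  proof -
    have "(\<Sum>i<p. lam i * (m i j - m 0 j)) = (\<Sum>i<p. lam i * m i j) - (\<Sum>i<p. lam i * m 0 j)"
      by (simp add: algebra_simps sum_subtractf)
    moreover have "(\<Sum>i<p. lam i * m 0 j) = (\<Sum>i<p. lam i) * m 0 j" by (simp add: sum_distrib_right)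
    ultimately show ?thesis using Dlam[OF that, of lam] by simp
  qed
  have ym: "(\<Sum>i<p. y i * m i j) = m 0 j + (\<Sum>l<k. D l j * x l)" if "j < q" for j
    using combo[OF that, of y] ysum yC by simp
  have "\<forall>j<q. (\<Sum>i<p. y i * m i j) \<ge> 0"
  proof (intro allI impI)
    fix j assume "j < q"
    have "(\<Sum>l<k. W j l * x l) \<le> w j" using x \<open>j < q\<close> unfolding inQ_def by blast
    then have "- (\<Sum>l<k. D l j * x l) \<le> m 0 j" unfolding W_def w_def by (simp add: sum_negf)
    then show "(\<Sum>i<p. y i * m i j) \<ge> 0" using ym \<open>j < q\<close> by simp
  qed
  then obtain lam where lam: "\<forall>i<p. lam i \<ge> 0" "\<forall>j<q. (\<Sum>i<p. lam i * m i j) = (\<Sum>i<p. y i * m i j)"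
    using R by blast
  define \<alpha> where "\<alpha> = (\<Sum>i<p. lam i) - 1"
  define u where "u = (\<lambda>l. (\<Sum>i<p. lam i * C i l) - x l)"
  have rel: "\<alpha> * m 0 j + (\<Sum>l<k. D l j * u l) = 0" if "j < q" for j
  proof -
    have "(\<Sum>i<p. lam i) * m 0 j + (\<Sum>l<k. D l j * (\<Sum>i<p. lam i * C i l)) = m 0 j + (\<Sum>l<k. D l j * x l)"
      using combo[OF that, of lam] lam(2) ym that by simp
    then show ?thesis unfolding \<alpha>_def u_def by (simp add: algebra_simps sum_subtractf)
  qed
  have "\<alpha> = 0"
  proof -
    have "0 = (\<Sum>j<q. (\<alpha> * m 0 j + (\<Sum>l<k. D l j * u l)) * z0 j)" using rel by simp
    also have "\<dots> = \<alpha> * (\<Sum>j<q. m 0 j * z0 j) + (\<Sum>l<k. u l * (\<Sum>j<q. D l j * z0 j))"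
      by (simp add: algebra_simps sum.distrib sum_distrib_left sum_distrib_right) (rule sum.swap)
    also have "(\<Sum>j<q. m 0 j * z0 j) = 1" using O p0 by simp
    also have "(\<Sum>l<k. u l * (\<Sum>j<q. D l j * z0 j)) = 0" using Dz0 by simp
    finally show ?thesis by simp
  qed
  then have "\<forall>j<q. (\<Sum>l<k. D l j * u l) = 0" using rel by simp
  then have "\<forall>l<k. u l = 0" by (rule injD)
  then have "\<forall>l<k. x l = (\<Sum>i<p. lam i * C i l)" unfolding u_def by simp
  moreover have "(\<Sum>i<p. lam i) = 1" using \<open>\<alpha> = 0\<close> unfolding \<alpha>_def by simp
  ultimately show ?thesis unfolding inP_def using lam(1) by blast
qed

lemma QsubP_C:
  assumes Cc: "\<forall>z. (\<forall>i<p. (\<Sum>j<q. m i j * z j) \<ge> 0) \<longrightarrow>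
     (\<exists>\<zeta>. (\<forall>j<q. \<zeta> j \<ge> 0) \<and> (\<forall>i<p. (\<Sum>j<q. m i j * \<zeta> j) = (\<Sum>j<q. m i j * z j)))"
    and x: "inQ q k W w x"
  shows "inP p k C x"
proof (rule ccontr)
  assume nP: "\<not> inP p k C x"
  define Gn where "Gn = (\<lambda>i l. if i < p then (if l < k then - C i l else 1) else (if l < k then x l else -1))"
  define hn where "hn = (\<lambda>i. if i = p then (1::real) else 0)"
  define G where "G = (\<lambda>kk l. case kk of B j \<Rightarrow> Gn j l | _ \<Rightarrow> 0)"
  define h where "h = (\<lambda>kk. case kk of B j \<Rightarrow> hn j | _ \<Rightarrow> 0)"
  have rowsum: "(\<Sum>l<Suc k. Gn i l * y l) = (if i < p then - (\<Sum>l<k. C i l * y l) + y k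
      else (\<Sum>l<k. x l * y l) - y k)" for i y
  proof -
    have "(\<Sum>l<Suc k. Gn i l * y l) = (\<Sum>l<k. Gn i l * y l) + Gn i k * y k" by simp
    also have "(\<Sum>l<k. Gn i l * y l) = (if i < p then - (\<Sum>l<k. C i l * y l) else (\<Sum>l<k. x l * y l))"
      unfolding Gn_def by (auto simp: sum_negf)
    finally show ?thesis unfolding Gn_def by auto
  qed
  have "\<exists>y. \<forall>kk\<in>B ` {..<Suc p}. (\<Sum>l<Suc k. G kk l * y l) \<ge> h kk"
  proof (rule ccontr)
    assume "\<not> (\<exists>y. \<forall>kk\<in>B ` {..<Suc p}. (\<Sum>l<Suc k. G kk l * y l) \<ge> h kk)"
    from farkas[OF _ this] obtain \<mu> where mu: "\<forall>kk\<in>B ` {..<Suc p}. \<mu> kk \<ge> 0"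
      "\<forall>l<Suc k. (\<Sum>kk\<in>B ` {..<Suc p}. \<mu> kk * G kk l) = 0" "(\<Sum>kk\<in>B ` {..<Suc p}. \<mu> kk * h kk) > 0" by auto
    define mm where "mm = (\<lambda>j. \<mu> (B j))"
    have m0: "\<forall>j<Suc p. mm j \<ge> 0" using mu(1) unfolding mm_def by auto
    have mG: "\<forall>l<Suc k. (\<Sum>j<Suc p. mm j * Gn j l) = 0" using mu(2) unfolding mm_def sumB G_def by simp
    have "(\<Sum>j<Suc p. mm j * hn j) > 0" using mu(3) unfolding mm_def sumB h_def by simp
    then have nu: "mm p > 0" unfolding hn_def by (simp add: if_distrib cong: if_cong)
    have eql: "(\<Sum>i<p. mm i * C i l) = mm p * x l" if "l < k" for l
    proof -
      have "0 = (\<Sum>j<Suc p. mm j * Gn j l)" using mG that by simp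
      also have "\<dots> = (\<Sum>j<p. mm j * Gn j l) + mm p * Gn p l" by simp
      also have "(\<Sum>j<p. mm j * Gn j l) = - (\<Sum>j<p. mm j * C j l)" unfolding Gn_def using that by (simp add: sum_negf)
      finally show ?thesis unfolding Gn_def using that by simp
    qed
    have eqn: "(\<Sum>i<p. mm i) = mm p"
    proof -
      have "0 = (\<Sum>j<Suc p. mm j * Gn j k)" using mG by simp
      also have "\<dots> = (\<Sum>j<p. mm j * Gn j k) + mm p * Gn p k" by simp
      also have "(\<Sum>j<p. mm j * Gn j k) = (\<Sum>j<p. mm j)" unfolding Gn_def by simp
      finally show ?thesis unfolding Gn_def by simp
    qed
    define lam where "lam = (\<lambda>i. mm i / mm p)"
    have "inP p k C x" unfolding inP_def
    proof (intro exI conjI allI impI)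
      show "\<And>i. i < p \<Longrightarrow> lam i \<ge> 0" using m0 nu unfolding lam_def by auto
      show "(\<Sum>i<p. lam i) = 1" unfolding lam_def using eqn nu by (simp add: sum_divide_distrib[symmetric])
      fix l assume "l < k"
      have "(\<Sum>i<p. lam i * C i l) = (\<Sum>i<p. mm i * C i l) / mm p" unfolding lam_def by (simp add: sum_divide_distrib)
      then show "x l = (\<Sum>i<p. lam i * C i l)" using eql[OF \<open>l < k\<close>] nu by simp
    qed
    then show False using nP by blast
  qed
  then obtain y where y: "\<forall>j<Suc p. (\<Sum>l<Suc k. Gn j l * y l) \<ge> hn j" unfolding G_def h_def by auto
  define c where "c = y k"
  have r1: "c - (\<Sum>l<k. C i l * y l) \<ge> 0" if "i < p" for i
    using y[rule_format, of i] that rowsum[of i y] unfolding hn_def c_def by auto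
  have r2: "(\<Sum>l<k. x l * y l) - c \<ge> 1" using y[rule_format, of p] rowsum[of p y] unfolding hn_def c_def by auto
  obtain zg where zg: "\<forall>l<k. (\<Sum>j<q. D l j * zg j) = y l" using spec[OF sz, of y] by blast
  define a0 where "a0 = (\<Sum>j<q. m 0 j * zg j)"
  define z where "z = (\<lambda>j. (c + a0) * z0 j - zg j)"
  have mzg: "(\<Sum>j<q. m i j * zg j) = a0 + (\<Sum>l<k. C i l * y l)" if "i < p" for i
  proof -
    have "(\<Sum>j<q. (m i j - m 0 j) * zg j) = (\<Sum>l<k. C i l * (\<Sum>j<q. D l j * zg j))" by (rule NC[OF that])
    also have "\<dots> = (\<Sum>l<k. C i l * y l)" using zg by simp
    finally show ?thesis unfolding a0_def by (simp add: algebra_simps sum_subtractf)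
  qed
  have mz: "(\<Sum>j<q. m i j * z j) = c - (\<Sum>l<k. C i l * y l)" if "i < p" for i
  proof -
    have "(\<Sum>j<q. m i j * z j) = (c + a0) * (\<Sum>j<q. m i j * z0 j) - (\<Sum>j<q. m i j * zg j)"
      unfolding z_def by (simp add: algebra_simps sum_subtractf sum_distrib_left)
    then show ?thesis using O that mzg[OF that] by simp
  qed
  have "\<forall>i<p. (\<Sum>j<q. m i j * z j) \<ge> 0" using mz r1 by simp
  then obtain \<zeta> where ze: "\<forall>j<q. \<zeta> j \<ge> 0" "\<forall>i<p. (\<Sum>j<q. m i j * \<zeta> j) = (\<Sum>j<q. m i j * z j)"
    using Cc by blast
  define b0 where "b0 = (\<Sum>j<q. m 0 j * \<zeta> j)"
  define u where "u = (\<lambda>l. (\<Sum>j<q. D l j * \<zeta> j) + y l)"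
  have rowi: "(b0 - c) + (\<Sum>l<k. C i l * u l) = 0" if "i < p" for i
  proof -
    have "(\<Sum>j<q. (m i j - m 0 j) * \<zeta> j) = (\<Sum>l<k. C i l * (\<Sum>j<q. D l j * \<zeta> j))" by (rule NC[OF that])
    then have "(\<Sum>j<q. m i j * \<zeta> j) = b0 + (\<Sum>l<k. C i l * (\<Sum>j<q. D l j * \<zeta> j))"
      unfolding b0_def by (simp add: algebra_simps sum_subtractf)
    moreover have "(\<Sum>l<k. C i l * u l) = (\<Sum>l<k. C i l * (\<Sum>j<q. D l j * \<zeta> j)) + (\<Sum>l<k. C i l * y l)"
      unfolding u_def by (simp add: algebra_simps sum.distrib)
    ultimately show ?thesis using ze(2) mz that by simp
  qed
  have "b0 = c" using rowi[OF p0] C0 by simp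
  then have "\<forall>i<p. (\<Sum>l<k. C i l * u l) = 0" using rowi by simp
  then have u0: "\<forall>l<k. u l = 0" by (rule injC)
  have "0 \<le> (\<Sum>j<q. \<zeta> j * (m 0 j + (\<Sum>l<k. D l j * x l)))"
  proof (rule sum_nonneg)
    fix j assume "j \<in> {..<q}"
    have "(\<Sum>l<k. W j l * x l) \<le> w j" using x \<open>j \<in> {..<q}\<close> unfolding inQ_def by blast
    then have "0 \<le> m 0 j + (\<Sum>l<k. D l j * x l)" unfolding W_def w_def by (simp add: sum_negf)
    then show "0 \<le> \<zeta> j * (m 0 j + (\<Sum>l<k. D l j * x l))" using ze(1) \<open>j \<in> {..<q}\<close> by simp
  qed
  also have "(\<Sum>j<q. \<zeta> j * (m 0 j + (\<Sum>l<k. D l j * x l))) = b0 + (\<Sum>l<k. x l * (\<Sum>j<q. D l j * \<zeta> j))"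
    unfolding b0_def by (simp add: algebra_simps sum.distrib sum_distrib_left sum_distrib_right) (rule sum.swap)
  also have "(\<Sum>l<k. x l * (\<Sum>j<q. D l j * \<zeta> j)) = - (\<Sum>l<k. x l * y l)"
  proof -
    have "(\<Sum>l<k. x l * (\<Sum>j<q. D l j * \<zeta> j)) = (\<Sum>l<k. - (x l * y l))"
    proof (rule sum.cong)
      fix l assume "l \<in> {..<k}"
      then have "(\<Sum>j<q. D l j * \<zeta> j) = - y l" using u0 unfolding u_def by (simp add: eq_neg_iff_add_eq_0)
      then show "x l * (\<Sum>j<q. D l j * \<zeta> j) = - (x l * y l)" by simp
    qed simp
    then show ?thesis by (simp add: sum_negf)
  qed
  finally show False using r2 \<open>b0 = c\<close> by simp
qed

end




lemma sum_list_vec: "sum_list (list_of_vec (l::real vec)) = (\<Sum>i<dim_vec l. l $ i)"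
  by (simp add: list_of_vec_map sum_set_upt_conv_sum_list_nat[symmetric] lessThan_atLeast0)

lemma mult_T: "(x::real vec) \<in> carrier_vec p \<Longrightarrow> M \<in> carrier_mat p q \<Longrightarrow> j < q \<Longrightarrow>
  (transpose_mat M *\<^sub>v x) $ j = (\<Sum>i<p. x $ i * M $$ (i, j))"
  by (simp add: scalar_prod_def lessThan_atLeast0 mult.commute)

lemma mult_M: "(z::real vec) \<in> carrier_vec q \<Longrightarrow> M \<in> carrier_mat p q \<Longrightarrow> i < p \<Longrightarrow>
  (M *\<^sub>v z) $ i = (\<Sum>j<q. M $$ (i, j) * z $ j)"
  by (simp add: scalar_prod_def lessThan_atLeast0)

lemma inP_cong: "(\<And>l. l < n \<Longrightarrow> x l = x' l) \<Longrightarrow> inP p n v x = inP p n v x'"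
proof -
  assume a: "\<And>l. l < n \<Longrightarrow> x l = x' l"
  have "(\<forall>l<n. x l = (\<Sum>i<p. lam i * v i l)) = (\<forall>l<n. x' l = (\<Sum>i<p. lam i * v i l))" for lam
    using a by simp
  then show ?thesis unfolding inP_def by simp
qed

lemma inQ_cong: "(\<And>l. l < n \<Longrightarrow> x l = x' l) \<Longrightarrow> inQ q n W w x = inQ q n W w x'"
proof -
  assume a: "\<And>l. l < n \<Longrightarrow> x l = x' l"
  have "(\<Sum>l<n. W j l * x l) = (\<Sum>l<n. W j l * x' l)" for j using a by (intro sum.cong) auto
  then show ?thesis unfolding inQ_def by simp
qed

lemma conv_rows_iff:
  assumes V: "V \<in> carrier_mat p n"
  shows "y \<in> conv_rows V \<longleftrightarrow> y \<in> carrier_vec n \<and> inP p n (\<lambda>i l. V $$ (i, l)) (\<lambda>l. y $ l)"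
proof
  assume "y \<in> conv_rows V"
  moreover have dr: "dim_row V = p" using V by simp
  ultimately obtain lam where lam: "lam \<in> carrier_vec p" "nonneg_vec lam" "sum_list (list_of_vec lam) = 1"
    "y = transpose_mat V *\<^sub>v lam" unfolding conv_rows_def dr by blast
  have "dim_vec y = n" unfolding lam(4) using V by simp
  then have "y \<in> carrier_vec n" by (rule carrier_vecI)
  moreover have "inP p n (\<lambda>i l. V $$ (i, l)) (\<lambda>l. y $ l)" unfolding inP_def
  proof (intro exI[of _ "\<lambda>i. lam $ i"] conjI allI impI)
    show "\<And>i. i < p \<Longrightarrow> lam $ i \<ge> 0" using lam(1,2) unfolding nonneg_vec_def by auto
    show "(\<Sum>i<p. lam $ i) = 1" using lam(1,3) sum_list_vec[of lam] by simp
    fix l assume "l < n"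
    then show "y $ l = (\<Sum>i<p. lam $ i * V $$ (i, l))" using mult_T[OF lam(1) V \<open>l < n\<close>] lam(4) by simp
  qed
  ultimately show "y \<in> carrier_vec n \<and> inP p n (\<lambda>i l. V $$ (i, l)) (\<lambda>l. y $ l)" ..
next
  assume a: "y \<in> carrier_vec n \<and> inP p n (\<lambda>i l. V $$ (i, l)) (\<lambda>l. y $ l)"
  then obtain lam where lam: "\<forall>i<p. lam i \<ge> 0" "(\<Sum>i<p. lam i) = 1" "\<forall>l<n. y $ l = (\<Sum>i<p. lam i * V $$ (i, l))"
    unfolding inP_def by blast
  define lv where "lv = vec p lam"
  have "lv \<in> carrier_vec p" unfolding lv_def by simp
  moreover have "nonneg_vec lv" unfolding lv_def nonneg_vec_def using lam(1) by simp
  moreover have "sum_list (list_of_vec lv) = 1" unfolding sum_list_vec lv_def using lam(2) by simp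
  moreover have "y = transpose_mat V *\<^sub>v lv"
  proof (rule eq_vecI)
    show "dim_vec y = dim_vec (transpose_mat V *\<^sub>v lv)" using a V by simp
    fix l assume "l < dim_vec (transpose_mat V *\<^sub>v lv)"
    then have "l < n" using V by simp
    then show "y $ l = (transpose_mat V *\<^sub>v lv) $ l" using mult_T[OF \<open>lv \<in> carrier_vec p\<close> V \<open>l < n\<close>] lam(3)
      unfolding lv_def by simp
  qed
  moreover have dr: "dim_row V = p" using V by simp
  ultimately show "y \<in> conv_rows V" unfolding conv_rows_def dr by blast
qed

lemma polyhedron_iff:
  assumes W: "W \<in> carrier_mat q n"
  shows "y \<in> polyhedron W w \<longleftrightarrow> y \<in> carrier_vec n \<and> inQ q n (\<lambda>j l. W $$ (j, l)) (\<lambda>j. w $ j) (\<lambda>l. y $ l)"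
proof -
  have "row W j \<bullet> y = (\<Sum>l<n. W $$ (j, l) * y $ l)" if "j < q" "y \<in> carrier_vec n" for j
    using that W by (simp add: scalar_prod_def lessThan_atLeast0)
  then show ?thesis unfolding polyhedron_def inQ_def using W by auto
qed




lemma inP_cong2: "(\<And>i l. i < p \<Longrightarrow> l < n \<Longrightarrow> v i l = v' i l) \<Longrightarrow> inP p n v x = inP p n v' x"
proof -
  assume a: "\<And>i l. i < p \<Longrightarrow> l < n \<Longrightarrow> v i l = v' i l"
  have "(\<Sum>i<p. lam i * v i l) = (\<Sum>i<p. lam i * v' i l)" if "l < n" for lam l
    using a that by (intro sum.cong) auto
  then have "(\<forall>l<n. x l = (\<Sum>i<p. lam i * v i l)) = (\<forall>l<n. x l = (\<Sum>i<p. lam i * v' i l))" for lam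
    by simp
  then show ?thesis unfolding inP_def by simp
qed

lemma inQ_cong2: "(\<And>j l. j < q \<Longrightarrow> l < n \<Longrightarrow> W j l = W' j l) \<Longrightarrow> (\<And>j. j < q \<Longrightarrow> w j = w' j)
  \<Longrightarrow> inQ q n W w x = inQ q n W' w' x"
proof -
  assume a: "\<And>j l. j < q \<Longrightarrow> l < n \<Longrightarrow> W j l = W' j l" and b: "\<And>j. j < q \<Longrightarrow> w j = w' j"
  have "(\<Sum>l<n. W j l * x l) = (\<Sum>l<n. W' j l * x l)" if "j < q" for j
    using a that by (intro sum.cong) auto
  then show ?thesis unfolding inQ_def using b by auto
qed

definition Rf :: "nat \<Rightarrow> nat \<Rightarrow> (nat \<Rightarrow> nat \<Rightarrow> real) \<Rightarrow> bool" where
  "Rf p q m \<longleftrightarrow> (\<forall>y. (\<forall>j<q. (\<Sum>i<p. y i * m i j) \<ge> 0) \<longrightarrow>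
     (\<exists>lam. (\<forall>i<p. lam i \<ge> 0) \<and> (\<forall>j<q. (\<Sum>i<p. lam i * m i j) = (\<Sum>i<p. y i * m i j))))"

definition Cf :: "nat \<Rightarrow> nat \<Rightarrow> (nat \<Rightarrow> nat \<Rightarrow> real) \<Rightarrow> bool" where
  "Cf p q m \<longleftrightarrow> (\<forall>z. (\<forall>i<p. (\<Sum>j<q. m i j * z j) \<ge> 0) \<longrightarrow>
     (\<exists>\<zeta>. (\<forall>j<q. \<zeta> j \<ge> 0) \<and> (\<forall>i<p. (\<Sum>j<q. m i j * \<zeta> j) = (\<Sum>j<q. m i j * z j))))"

lemma Rset:
  assumes M: "M \<in> carrier_mat p q" and nn: "nonneg_mat M"
  shows "({transpose_mat M *\<^sub>v x | x. x \<in> carrier_vec p \<and> nonneg_vec x}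
      = {transpose_mat M *\<^sub>v x | x. x \<in> carrier_vec p} \<inter> {y \<in> carrier_vec q. nonneg_vec y})
     \<longleftrightarrow> Rf p q (\<lambda>i j. M $$ (i, j))"
proof -
  have nnm: "M $$ (i, j) \<ge> 0" if "i < p" "j < q" for i j using nn M that unfolding nonneg_mat_def by auto
  have Mx: "transpose_mat M *\<^sub>v x \<in> carrier_vec q" for x using M by (intro carrier_vecI) simp
  define A where "A = {transpose_mat M *\<^sub>v x | x. x \<in> carrier_vec p \<and> nonneg_vec x}"
  define B where "B = {transpose_mat M *\<^sub>v x | x. x \<in> carrier_vec p} \<inter> {y \<in> carrier_vec q. nonneg_vec y}"
  have AB: "A \<subseteq> B"
  proof
    fix u assume "u \<in> A"
    then obtain x where x: "x \<in> carrier_vec p" "nonneg_vec x" "u = transpose_mat M *\<^sub>v x" unfolding A_def by blast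
    have "nonneg_vec u" unfolding nonneg_vec_def
    proof (intro allI impI)
      fix j assume "j < dim_vec u"
      then have "j < q" using x(3) M by simp
      have "u $ j = (\<Sum>i<p. x $ i * M $$ (i, j))" using mult_T[OF x(1) M \<open>j < q\<close>] x(3) by simp
      also have "\<dots> \<ge> 0" using x(1,2) nnm \<open>j < q\<close> unfolding nonneg_vec_def by (intro sum_nonneg) auto
      finally show "u $ j \<ge> 0" .
    qed
    then show "u \<in> B" unfolding B_def using x Mx by blast
  qed
  have "B \<subseteq> A \<longleftrightarrow> Rf p q (\<lambda>i j. M $$ (i, j))"
  proof
    assume BA: "B \<subseteq> A"
    show "Rf p q (\<lambda>i j. M $$ (i, j))" unfolding Rf_def
    proof (intro allI impI)
      fix y :: "nat \<Rightarrow> real" assume y: "\<forall>j<q. (\<Sum>i<p. y i * M $$ (i, j)) \<ge> 0"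
      define yv where "yv = vec p y"
      have yv: "yv \<in> carrier_vec p" unfolding yv_def by simp
      have e: "(transpose_mat M *\<^sub>v yv) $ j = (\<Sum>i<p. y i * M $$ (i, j))" if "j < q" for j
        using mult_T[OF yv M that] unfolding yv_def by simp
      have "nonneg_vec (transpose_mat M *\<^sub>v yv)" unfolding nonneg_vec_def using e y M by simp
      then have "transpose_mat M *\<^sub>v yv \<in> B" unfolding B_def using yv Mx by blast
      then have "transpose_mat M *\<^sub>v yv \<in> A" using BA by blast
      then obtain x where x: "x \<in> carrier_vec p" "nonneg_vec x" "transpose_mat M *\<^sub>v yv = transpose_mat M *\<^sub>v x"
        unfolding A_def by blast
      show "\<exists>lam. (\<forall>i<p. lam i \<ge> 0) \<and> (\<forall>j<q. (\<Sum>i<p. lam i * M $$ (i, j)) = (\<Sum>i<p. y i * M $$ (i, j)))"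
      proof (intro exI[of _ "\<lambda>i. x $ i"] conjI allI impI)
        show "\<And>i. i < p \<Longrightarrow> x $ i \<ge> 0" using x(1,2) unfolding nonneg_vec_def by auto
        fix j assume "j < q"
        show "(\<Sum>i<p. x $ i * M $$ (i, j)) = (\<Sum>i<p. y i * M $$ (i, j))"
          using mult_T[OF x(1) M \<open>j < q\<close>] e[OF \<open>j < q\<close>] x(3) by simp
      qed
    qed
  next
    assume R: "Rf p q (\<lambda>i j. M $$ (i, j))"
    show "B \<subseteq> A"
    proof
      fix u assume "u \<in> B"
      then obtain x where x: "x \<in> carrier_vec p" "u = transpose_mat M *\<^sub>v x" "nonneg_vec u" unfolding B_def by blast
      have e: "u $ j = (\<Sum>i<p. x $ i * M $$ (i, j))" if "j < q" for j using mult_T[OF x(1) M that] x(2) by simp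
      have "\<forall>j<q. (\<Sum>i<p. x $ i * M $$ (i, j)) \<ge> 0" using x(2,3) e M unfolding nonneg_vec_def by auto
      then obtain lam where lam: "\<forall>i<p. lam i \<ge> 0" "\<forall>j<q. (\<Sum>i<p. lam i * M $$ (i, j)) = (\<Sum>i<p. x $ i * M $$ (i, j))"
        using R unfolding Rf_def by blast
      define xv where "xv = vec p lam"
      have xv: "xv \<in> carrier_vec p" unfolding xv_def by simp
      have "u = transpose_mat M *\<^sub>v xv"
      proof (rule eq_vecI)
        show "dim_vec u = dim_vec (transpose_mat M *\<^sub>v xv)" using x(2) M by simp
        fix j assume "j < dim_vec (transpose_mat M *\<^sub>v xv)"
        then have "j < q" using M by simp
        show "u $ j = (transpose_mat M *\<^sub>v xv) $ j" using mult_T[OF xv M \<open>j < q\<close>] e[OF \<open>j < q\<close>] lam(2) \<open>j < q\<close>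
          unfolding xv_def by simp
      qed
      moreover have "nonneg_vec xv" unfolding xv_def nonneg_vec_def using lam(1) by simp
      ultimately show "u \<in> A" unfolding A_def using xv by blast
    qed
  qed
  then show ?thesis using AB unfolding A_def[symmetric] B_def[symmetric] by blast
qed

lemma Cset:
  assumes M: "M \<in> carrier_mat p q" and nn: "nonneg_mat M"
  shows "({M *\<^sub>v z | z. z \<in> carrier_vec q \<and> nonneg_vec z}
      = {M *\<^sub>v z | z. z \<in> carrier_vec q} \<inter> {y \<in> carrier_vec p. nonneg_vec y})
     \<longleftrightarrow> Cf p q (\<lambda>i j. M $$ (i, j))"
proof -
  have nnm: "M $$ (i, j) \<ge> 0" if "i < p" "j < q" for i j using nn M that unfolding nonneg_mat_def by auto
  have Mx: "M *\<^sub>v x \<in> carrier_vec p" for x using M by (intro carrier_vecI) simp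
  define A where "A = {M *\<^sub>v z | z. z \<in> carrier_vec q \<and> nonneg_vec z}"
  define B where "B = {M *\<^sub>v z | z. z \<in> carrier_vec q} \<inter> {y \<in> carrier_vec p. nonneg_vec y}"
  have AB: "A \<subseteq> B"
  proof
    fix u assume "u \<in> A"
    then obtain x where x: "x \<in> carrier_vec q" "nonneg_vec x" "u = M *\<^sub>v x" unfolding A_def by blast
    have "nonneg_vec u" unfolding nonneg_vec_def
    proof (intro allI impI)
      fix i assume "i < dim_vec u"
      then have "i < p" using x(3) M by simp
      have "u $ i = (\<Sum>j<q. M $$ (i, j) * x $ j)" using mult_M[OF x(1) M \<open>i < p\<close>] x(3) by simp
      also have "\<dots> \<ge> 0" using x(1,2) nnm \<open>i < p\<close> unfolding nonneg_vec_def by (intro sum_nonneg) auto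
      finally show "u $ i \<ge> 0" .
    qed
    then show "u \<in> B" unfolding B_def using x Mx by blast
  qed
  have "B \<subseteq> A \<longleftrightarrow> Cf p q (\<lambda>i j. M $$ (i, j))"
  proof
    assume BA: "B \<subseteq> A"
    show "Cf p q (\<lambda>i j. M $$ (i, j))" unfolding Cf_def
    proof (intro allI impI)
      fix y :: "nat \<Rightarrow> real" assume y: "\<forall>i<p. (\<Sum>j<q. M $$ (i, j) * y j) \<ge> 0"
      define yv where "yv = vec q y"
      have yv: "yv \<in> carrier_vec q" unfolding yv_def by simp
      have e: "(M *\<^sub>v yv) $ i = (\<Sum>j<q. M $$ (i, j) * y j)" if "i < p" for i
        using mult_M[OF yv M that] unfolding yv_def by simp
      have "nonneg_vec (M *\<^sub>v yv)" unfolding nonneg_vec_def using e y M by simp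
      then have "M *\<^sub>v yv \<in> B" unfolding B_def using yv Mx by blast
      then have "M *\<^sub>v yv \<in> A" using BA by blast
      then obtain x where x: "x \<in> carrier_vec q" "nonneg_vec x" "M *\<^sub>v yv = M *\<^sub>v x"
        unfolding A_def by blast
      show "\<exists>\<zeta>. (\<forall>j<q. \<zeta> j \<ge> 0) \<and> (\<forall>i<p. (\<Sum>j<q. M $$ (i, j) * \<zeta> j) = (\<Sum>j<q. M $$ (i, j) * y j))"
      proof (intro exI[of _ "\<lambda>i. x $ i"] conjI allI impI)
        show "\<And>i. i < q \<Longrightarrow> x $ i \<ge> 0" using x(1,2) unfolding nonneg_vec_def by auto
        fix i assume "i < p"
        show "(\<Sum>j<q. M $$ (i, j) * x $ j) = (\<Sum>j<q. M $$ (i, j) * y j)"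
          using mult_M[OF x(1) M \<open>i < p\<close>] e[OF \<open>i < p\<close>] x(3) by simp
      qed
    qed
  next
    assume R: "Cf p q (\<lambda>i j. M $$ (i, j))"
    show "B \<subseteq> A"
    proof
      fix u assume "u \<in> B"
      then obtain x where x: "x \<in> carrier_vec q" "u = M *\<^sub>v x" "nonneg_vec u" unfolding B_def by blast
      have e: "u $ i = (\<Sum>j<q. M $$ (i, j) * x $ j)" if "i < p" for i using mult_M[OF x(1) M that] x(2) by simp
      have "\<forall>i<p. (\<Sum>j<q. M $$ (i, j) * x $ j) \<ge> 0" using x(2,3) e M unfolding nonneg_vec_def by auto
      then obtain lam where lam: "\<forall>j<q. lam j \<ge> 0" "\<forall>i<p. (\<Sum>j<q. M $$ (i, j) * lam j) = (\<Sum>j<q. M $$ (i, j) * x $ j)"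
        using R unfolding Cf_def by blast
      define xv where "xv = vec q lam"
      have xv: "xv \<in> carrier_vec q" unfolding xv_def by simp
      have "u = M *\<^sub>v xv"
      proof (rule eq_vecI)
        show "dim_vec u = dim_vec (M *\<^sub>v xv)" using x(2) M by simp
        fix i assume "i < dim_vec (M *\<^sub>v xv)"
        then have "i < p" using M by simp
        show "u $ i = (M *\<^sub>v xv) $ i" using mult_M[OF xv M \<open>i < p\<close>] e[OF \<open>i < p\<close>] lam(2) \<open>i < p\<close>
          unfolding xv_def by simp
      qed
      moreover have "nonneg_vec xv" unfolding xv_def nonneg_vec_def using lam(1) by simp
      ultimately show "u \<in> A" unfolding A_def using xv by blast
    qed
  qed
  then show ?thesis using AB unfolding A_def[symmetric] B_def[symmetric] by blast
qed

lemma Oset: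
  assumes M: "(M::real mat) \<in> carrier_mat p q"
  shows "(\<exists>z \<in> carrier_vec q. M *\<^sub>v z = vec p (\<lambda>_. 1)) \<longleftrightarrow> (\<exists>z. \<forall>i<p. (\<Sum>j<q. M $$ (i, j) * z j) = 1)"
proof
  assume "\<exists>z \<in> carrier_vec q. M *\<^sub>v z = vec p (\<lambda>_. 1)"
  then obtain z where z: "z \<in> carrier_vec q" "M *\<^sub>v z = vec p (\<lambda>_. 1)" by blast
  have "\<forall>i<p. (\<Sum>j<q. M $$ (i, j) * z $ j) = 1"
  proof (intro allI impI)
    fix i assume "i < p"
    have "(M *\<^sub>v z) $ i = 1" using z(2) \<open>i < p\<close> by simp
    then show "(\<Sum>j<q. M $$ (i, j) * z $ j) = 1" using mult_M[OF z(1) M \<open>i < p\<close>] by simp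
  qed
  then show "\<exists>z. \<forall>i<p. (\<Sum>j<q. M $$ (i, j) * z j) = 1" by blast
next
  assume "\<exists>z. \<forall>i<p. (\<Sum>j<q. M $$ (i, j) * z j) = 1"
  then obtain z where z: "\<forall>i<p. (\<Sum>j<q. M $$ (i, j) * z j) = 1" by blast
  define zv where "zv = vec q z"
  have zv: "zv \<in> carrier_vec q" unfolding zv_def by simp
  have "M *\<^sub>v zv = vec p (\<lambda>_. 1)"
  proof (rule eq_vecI)
    show "dim_vec (M *\<^sub>v zv) = dim_vec (vec p (\<lambda>_. 1::real))" using M by simp
    fix i assume "i < dim_vec (vec p (\<lambda>_. 1::real))"
    then have "i < p" by simp
    show "(M *\<^sub>v zv) $ i = vec p (\<lambda>_. 1) $ i" using mult_M[OF zv M \<open>i < p\<close>] z \<open>i < p\<close> unfolding zv_def by simp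
  qed
  then show "\<exists>z \<in> carrier_vec q. M *\<^sub>v z = vec p (\<lambda>_. 1)" using zv by blast
qed




lemma forward:
  assumes M: "M \<in> carrier_mat p q" and sl: "is_slack_matrix M"
  shows "Rf p q (\<lambda>i j. M $$ (i, j)) \<and> Cf p q (\<lambda>i j. M $$ (i, j)) \<and> (\<exists>z. \<forall>i<p. (\<Sum>j<q. M $$ (i, j) * z j) = 1)"
proof -
  have dr: "dim_row M = p" "dim_col M = q" using M by auto
  obtain n V W w where V: "V \<in> carrier_mat p n" and W: "W \<in> carrier_mat q n" and w: "w \<in> carrier_vec q"
    and PQ: "conv_rows V = polyhedron W w" and d1: "dim_ge_1 (conv_rows V)"
    and Meq: "M = mat p q (\<lambda>(i, j). w $ j - row W j \<bullet> row V i)"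
    using sl unfolding is_slack_matrix_def dr by blast
  define v where "v = (\<lambda>i l. V $$ (i, l))"
  define Wf where "Wf = (\<lambda>j l. W $$ (j, l))"
  define wf where "wf = (\<lambda>j. w $ j)"
  have PQf: "inP p n v x \<longleftrightarrow> inQ q n Wf wf x" for x
  proof -
    have "inP p n v x \<longleftrightarrow> inP p n v (\<lambda>l. vec n x $ l)" by (rule inP_cong) simp
    also have "\<dots> \<longleftrightarrow> vec n x \<in> conv_rows V" using conv_rows_iff[OF V, of "vec n x"] unfolding v_def by simp
    also have "\<dots> \<longleftrightarrow> vec n x \<in> polyhedron W w" using PQ by simp
    also have "\<dots> \<longleftrightarrow> inQ q n Wf wf (\<lambda>l. vec n x $ l)" using polyhedron_iff[OF W, of "vec n x" w]
      unfolding Wf_def wf_def by simp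
    also have "\<dots> \<longleftrightarrow> inQ q n Wf wf x" by (rule inQ_cong) simp
    finally show ?thesis .
  qed
  have dimf: "\<exists>x y. inP p n v x \<and> inP p n v y \<and> (\<exists>l<n. x l \<noteq> y l)"
  proof -
    obtain x y where xy: "x \<in> conv_rows V" "y \<in> conv_rows V" "x \<noteq> y" using d1 unfolding dim_ge_1_def by blast
    have cx: "x \<in> carrier_vec n" "inP p n v (\<lambda>l. x $ l)" using xy(1) conv_rows_iff[OF V] unfolding v_def by auto
    have cy: "y \<in> carrier_vec n" "inP p n v (\<lambda>l. y $ l)" using xy(2) conv_rows_iff[OF V] unfolding v_def by auto
    have "\<exists>l<n. x $ l \<noteq> y $ l"
    proof (rule ccontr)
      assume "\<not> (\<exists>l<n. x $ l \<noteq> y $ l)"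
      then have "x = y" using cx(1) cy(1) by (intro eq_vecI) auto
      then show False using xy(3) by simp
    qed
    then show ?thesis using cx(2) cy(2) by blast
  qed
  interpret sd: slackdata p q n v Wf wf using PQf dimf by unfold_locales auto
  have Sm: "M $$ (i, j) = sd.S i j" if "i < p" "j < q" for i j
  proof -
    have "row W j \<bullet> row V i = (\<Sum>l<n. Wf j l * v i l)"
      using that V W unfolding Wf_def v_def by (simp add: scalar_prod_def lessThan_atLeast0)
    moreover have "sd.S i j = wf j - (\<Sum>l<n. Wf j l * v i l)" by (rule sd.S_def)
    ultimately show ?thesis using that unfolding Meq wf_def by simp
  qed
  have sumL: "(\<Sum>i<p. y i * M $$ (i, j)) = (\<Sum>i<p. y i * sd.S i j)" if "j < q" for y j
    using Sm that by (intro sum.cong) auto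
  have sumR: "(\<Sum>j<q. M $$ (i, j) * z j) = (\<Sum>j<q. sd.S i j * z j)" if "i < p" for z i
    using Sm that by (intro sum.cong) auto
  have "Rf p q (\<lambda>i j. M $$ (i, j))" unfolding Rf_def
  proof (intro allI impI)
    fix y :: "nat \<Rightarrow> real" assume "\<forall>j<q. (\<Sum>i<p. y i * M $$ (i, j)) \<ge> 0"
    then have "\<forall>j<q. (\<Sum>i<p. y i * sd.S i j) \<ge> 0" using sumL by simp
    from sd.fwR[OF this] obtain lam where "\<forall>i<p. lam i \<ge> 0" "\<forall>j<q. (\<Sum>i<p. lam i * sd.S i j) = (\<Sum>i<p. y i * sd.S i j)"
      by blast
    then show "\<exists>lam. (\<forall>i<p. lam i \<ge> 0) \<and> (\<forall>j<q. (\<Sum>i<p. lam i * M $$ (i, j)) = (\<Sum>i<p. y i * M $$ (i, j)))"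
      using sumL by auto
  qed
  moreover have "Cf p q (\<lambda>i j. M $$ (i, j))" unfolding Cf_def
  proof (intro allI impI)
    fix z :: "nat \<Rightarrow> real" assume "\<forall>i<p. (\<Sum>j<q. M $$ (i, j) * z j) \<ge> 0"
    then have "\<forall>i<p. (\<Sum>j<q. sd.S i j * z j) \<ge> 0" using sumR by simp
    from sd.fwC[OF this] obtain z' where "\<forall>j<q. z' j \<ge> 0" "\<forall>i<p. (\<Sum>j<q. sd.S i j * z' j) = (\<Sum>j<q. sd.S i j * z j)"
      by blast
    then show "\<exists>\<zeta>. (\<forall>j<q. \<zeta> j \<ge> 0) \<and> (\<forall>i<p. (\<Sum>j<q. M $$ (i, j) * \<zeta> j) = (\<Sum>j<q. M $$ (i, j) * z j))"
      using sumR by auto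
  qed
  moreover have "\<exists>z. \<forall>i<p. (\<Sum>j<q. M $$ (i, j) * z j) = 1"
  proof -
    obtain z where "\<forall>i<p. (\<Sum>j<q. sd.S i j * z j) = 1" using sd.one by blast
    then show ?thesis using sumR by auto
  qed
  ultimately show ?thesis by blast
qed




lemma backward:
  assumes M: "M \<in> carrier_mat p q" and nn: "nonneg_mat M" and rk: "vec_space.rank p M \<ge> 2"
    and O: "\<exists>z. \<forall>i<p. (\<Sum>j<q. M $$ (i, j) * z j) = 1"
    and RC: "Rf p q (\<lambda>i j. M $$ (i, j)) \<or> Cf p q (\<lambda>i j. M $$ (i, j))"
  shows "is_slack_matrix M"
proof -
  define m where "m = (\<lambda>i j. M $$ (i, j))"
  have diff: "\<exists>i<p. \<exists>j<q. m i j \<noteq> m 0 j"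
  proof (rule ccontr)
    assume a: "\<not> (\<exists>i<p. \<exists>j<q. m i j \<noteq> m 0 j)"
    have "M $$ (r, c) = (\<lambda>_. 1) r * (\<lambda>c. M $$ (0, c)) c" if "r < dim_row M" "c < dim_col M" for r c
    proof -
      have "r < p" "c < q" using that M by auto
      then have "m r c = m 0 c" using a by blast
      then show ?thesis unfolding m_def by simp
    qed
    then have "vec_space.rank p M \<le> 1"
      by (rule vec_space.rank_le_1_product_entries[OF M])
    then show False using rk by simp
  qed
  then have p0: "0 < p" by auto
  have nonneg: "\<forall>i<p. \<forall>j<q. m i j \<ge> 0" using nn M unfolding nonneg_mat_def m_def by auto
  obtain z0 where z0: "\<forall>i<p. (\<Sum>j<q. m i j * z0 j) = 1" using O unfolding m_def by blast
  obtain k :: nat and C D where fac: "\<forall>i<p. \<forall>j<q. m i j - m 0 j = (\<Sum>l<k. C i l * D l j)"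
    and sy: "\<forall>t. \<exists>y. \<forall>l<k. (\<Sum>i<p. y i * C i l) = t l"
    and sz: "\<forall>g. \<exists>z. \<forall>l<k. (\<Sum>j<q. D l j * z j) = g l"
    using factor[where p=p and q=q and A="\<lambda>i j. m i j - m 0 j"] by blast
  interpret cd: convdata p q k m C D z0
    using p0 nonneg z0 fac sy sz by unfold_locales auto
  have key: "inP p k C x \<longleftrightarrow> inQ q k cd.W cd.w x" for x
  proof
    assume "inQ q k cd.W cd.w x"
    then show "inP p k C x"
    proof -
      assume x: "inQ q k cd.W cd.w x"
      show ?thesis using RC
      proof
        assume "Rf p q (\<lambda>i j. M $$ (i, j))"
        then show ?thesis using cd.QsubP_R[OF _ x] unfolding Rf_def m_def by blast
      next
        assume "Cf p q (\<lambda>i j. M $$ (i, j))"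
        then show ?thesis using cd.QsubP_C[OF _ x] unfolding Cf_def m_def by blast
      qed
    qed
  qed (rule cd.PsubQ)
  define Vm where "Vm = mat p k (\<lambda>(i, l). C i l)"
  define Wm where "Wm = mat q k (\<lambda>(j, l). cd.W j l)"
  define wv where "wv = vec q (\<lambda>j. cd.w j)"
  have Vm: "Vm \<in> carrier_mat p k" unfolding Vm_def by simp
  have Wm: "Wm \<in> carrier_mat q k" unfolding Wm_def by simp
  have wv: "wv \<in> carrier_vec q" unfolding wv_def by simp
  have inPV: "inP p k (\<lambda>i l. Vm $$ (i, l)) x \<longleftrightarrow> inP p k C x" for x
    by (rule inP_cong2) (simp add: Vm_def)
  have inQW: "inQ q k (\<lambda>j l. Wm $$ (j, l)) (\<lambda>j. wv $ j) x \<longleftrightarrow> inQ q k cd.W cd.w x" for x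
    by (rule inQ_cong2) (simp_all add: Wm_def wv_def)
  have PQ: "conv_rows Vm = polyhedron Wm wv"
  proof -
    have "y \<in> conv_rows Vm \<longleftrightarrow> y \<in> polyhedron Wm wv" for y
      unfolding conv_rows_iff[OF Vm] polyhedron_iff[OF Wm] inPV inQW key ..
    then show ?thesis by blast
  qed
  have d1: "dim_ge_1 (conv_rows Vm)"
  proof -
    obtain x y l where xy: "inP p k C x" "inP p k C y" "l < k" "x l \<noteq> y l" using cd.dimP[OF diff] by blast
    have inV: "vec k f \<in> conv_rows Vm" if "inP p k C f" for f
    proof -
      have "inP p k C (\<lambda>l. vec k f $ l)" using that by (subst inP_cong[where x' = f]) auto
      then show ?thesis unfolding conv_rows_iff[OF Vm] inPV by simp
    qed
    have "vec k x \<noteq> vec k y" using xy(3,4) by (metis index_vec)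
    then show ?thesis unfolding dim_ge_1_def using inV xy(1,2) by blast
  qed
  have Meq: "M = mat p q (\<lambda>(i, j). wv $ j - row Wm j \<bullet> row Vm i)"
  proof (rule eq_matI)
    show "dim_row M = dim_row (mat p q (\<lambda>(i, j). wv $ j - row Wm j \<bullet> row Vm i))" using M by simp
    show "dim_col M = dim_col (mat p q (\<lambda>(i, j). wv $ j - row Wm j \<bullet> row Vm i))" using M by simp
    fix i j assume "i < dim_row (mat p q (\<lambda>(i, j). wv $ j - row Wm j \<bullet> row Vm i))"
      "j < dim_col (mat p q (\<lambda>(i, j). wv $ j - row Wm j \<bullet> row Vm i))"
    then have ij: "i < p" "j < q" by auto
    have "row Wm j \<bullet> row Vm i = (\<Sum>l<k. cd.W j l * C i l)"
      using ij unfolding Wm_def Vm_def by (simp add: scalar_prod_def lessThan_atLeast0)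
    then have "mat p q (\<lambda>(i, j). wv $ j - row Wm j \<bullet> row Vm i) $$ (i, j) = cd.w j - (\<Sum>l<k. cd.W j l * C i l)"
      using ij unfolding wv_def by simp
    also have "\<dots> = m i j" using cd.match[OF ij] by simp
    finally show "M $$ (i, j) = mat p q (\<lambda>(i, j). wv $ j - row Wm j \<bullet> row Vm i) $$ (i, j)"
      unfolding m_def by simp
  qed
  have dr: "dim_row M = p" "dim_col M = q" using M by auto
  show ?thesis unfolding is_slack_matrix_def dr
    using Vm Wm wv PQ d1 Meq by blast
qed


theorem corollary2p7:
  fixes M :: "real mat" and p q :: nat
  assumes "M \<in> carrier_mat p q"
    and "nonneg_mat M"
    and "vec_space.rank p M \<ge> 2"
  shows "(is_slack_matrix M \<longleftrightarrow>
            {transpose_mat M *\<^sub>v x | x. x \<in> carrier_vec p \<and> nonneg_vec x}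
              = {transpose_mat M *\<^sub>v x | x. x \<in> carrier_vec p} \<inter> {y \<in> carrier_vec q. nonneg_vec y}
            \<and> (\<exists>z \<in> carrier_vec q. M *\<^sub>v z = vec p (\<lambda>_. 1)))
       \<and> (is_slack_matrix M \<longleftrightarrow>
            {M *\<^sub>v z | z. z \<in> carrier_vec q \<and> nonneg_vec z}
              = {M *\<^sub>v z | z. z \<in> carrier_vec q} \<inter> {y \<in> carrier_vec p. nonneg_vec y}
            \<and> (\<exists>z \<in> carrier_vec q. M *\<^sub>v z = vec p (\<lambda>_. 1)))"
proof -
  note R = Rset[OF assms(1,2)]
  note C = Cset[OF assms(1,2)]
  note O = Oset[OF assms(1)]
  note F = forward[OF assms(1)]
  note Bk = backward[OF assms(1,2,3)]
  show ?thesis unfolding R C O using F Bk by blast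
qed

end
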